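(* Let $(X,\rho)$, $X_0$, the measures $\mu_x^U$ and the harmonic function spaces $\mathcal H(U)$ be as described in the context, and suppose that there exist a quasi-capacity $m$ on $X_0$ (with some constant $c\ge 1$), an increasing continuous function $m_0\colon(0,\infty)\to(0,\infty)$ and constants $\alpha,a,\eta\in(0,1/3)$, $c_0\ge 1$ such that the following three properties hold: (T) for every $U(x,r)\in\mathcal U_0$, $c_0^{-1}m_0(r)\le m(U(x,r))\le c_0 m_0(r)$; (SC) for every $r>0$, $a\,m_0(r)\le m_0(\alpha r)$, and $\lim_{r\to0}m_0(r)=0$; (KS) for all $U(x,r)\in\mathcal U_0$, all $y\in U(x,\alpha r)$ and all closed sets $F\subseteq U(x,\alpha r)$, $$\mu_y^{U(x,r)\setminus F}(F)\ \ge\ \eta\,\frac{m(F)}{m(U(x,r))}.$$ Then the Harnack property (HI) holds if and only if property (HJ) holds. In particular, (HI) holds if, for every $U(x,r)\in\mathcal U_0$, the measure $\mu_x^{U(x,r)}$ is supported by the boundary of $U(x,r)$. Here: (HI): there exist $\alpha'\in(0,1)$ and $K\ge 1$ such that for all $U(x_0,R)\in\mathcal U_0$ and all $h\in\mathcal H_b^+(U(x_0,R))$, $\sup_{U(x_0,\alpha' R)} h\le K\inf_{U(x_0,\alpha' R)} h$. (HJ): there exist $\alpha'\in(0,1)$ and $c_J\ge1$ such that for all $x\in X_0$, all $0<r<\alpha' R_0(x)$ and all $y\in U(x,\alpha'^2 r)$, one has $\mu_x^{U(x,\alpha' r)}(E)\le c_J\,\mu_y^{U(x,r)}(E)$ for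 every Borel set $E\subseteq X\setminus U(x,r)$.
   Context: $(X,\rho)$ is a separable metric space with Borel $\sigma$-algebra $\mathcal B(X)$; $\mathcal M(X)$ denotes the finite measures on $\mathcal B(X)$ (also regarded as measures on the universally measurable sets), $\|\mu\|:=\mu(X)$, and $\varepsilon_x$ is the Dirac measure at $x$. For an open set $Y\subseteq X$, $\mathcal U(Y)$ is the set of open sets $U$ with $\overline U\subseteq Y$. $X_0$ is a fixed open subset of $X$. For every $x\in X$ and $U\in\mathcal U(X_0)$ a measure $\mu_x^U\in\mathcal M(X)$ is given such that, for all $x\in X$ and $U,V\in\mathcal U(X_0)$: (M0) $\mu_x^U(U)=0$, $\|\mu_x^U\|\le1$, and $\mu_x^U=\varepsilon_x$ if $x\notin U$; (M1) for every Borel $E$ the function $y\mapsto\mu_y^U(E)$ is universally measurable, and if $V\subseteq U$ then $\mu_x^U=\int\mu_y^U\,d\mu_x^V(y)$. For $U\in\mathcal U(X_0)$, $\mathcal H(U)$ is the set of universally measurable real functions $h$ on $X$ such that for all $V\in\mathcal U(U)$ and $x\in V$, $h$ is $\mu_x^V$-integrable and $\int h\,d\mu_x^V=h(x)$; $\mathcal H^+(U)$ and $\mathcal H_b^+(U)$ denote its nonnegative, respectively bounded nonnegative, elements. $U(x,r):=\{y\in X:\rho(x,y)<r\}$; for $x\in X_0$, $R_0(x):=\sup\{r>0:\overline{U(x,r)}\subseteq X_0\}$; $\mathcal U_0:=\{U(x,r):x\in X_0,\ r<R_0(x)\}$. A quasi-capacity with constant $c\ge1$ on $X_0$ is an increasing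 function $m\ge 0$ on the universally measurable subsets of $X_0$ such that for all universally measurable $A,B\subseteq X_0$: $m(A)=\sup\{m(F):F\subseteq A,\ F\text{ closed}\}$ and $m(A\cup B)\le c(m(A)+m(B))$. *)

theory Defs
  imports "HOL-Analysis.Analysis"
begin

definition univ_meas :: "'a::topological_space set \<Rightarrow> bool" where
  "univ_meas A \<longleftrightarrow>
     (\<forall>M::'a measure. finite_measure M \<and> sets M = sets borel \<longrightarrow> A \<in> sets (completion M))"

definition univ_meas_fun :: "('a::topological_space \<Rightarrow> real) \<Rightarrow> bool" where
  "univ_meas_fun f \<longleftrightarrow>
     (\<forall>M::'a measure. finite_measure M \<and> sets M = sets borel \<longrightarrow> f \<in> borel_measurable (completion M))"

definition calU :: "'a::topological_space set \<Rightarrow> 'a set set" where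
  "calU Y = {U. open U \<and> closure U \<subseteq> Y}"

definition R0 :: "'a::metric_space set \<Rightarrow> 'a \<Rightarrow> ereal" where
  "R0 X0 x = Sup {ereal r | r. r > 0 \<and> closure (ball x r) \<subseteq> X0}"

definition harmonic :: "('a::topological_space \<Rightarrow> 'a set \<Rightarrow> 'a measure) \<Rightarrow> 'a set \<Rightarrow> ('a \<Rightarrow> real) set" where
  "harmonic \<mu> U = {h. univ_meas_fun h \<and>
     (\<forall>V \<in> calU U. \<forall>x \<in> V. integrable (completion (\<mu> x V)) h \<and>
                               integral\<^sup>L (completion (\<mu> x V)) h = h x)}"

definition harmonic_bpos :: "('a::topological_space \<Rightarrow> 'a set \<Rightarrow> 'a measure) \<Rightarrow> 'a set \<Rightarrow> ('a \<Rightarrow> real) set" where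
  "harmonic_bpos \<mu> U = {h \<in> harmonic \<mu> U. (\<forall>x. 0 \<le> h x) \<and> bounded (range h)}"

definition quasi_capacity :: "'a::topological_space set \<Rightarrow> real \<Rightarrow> ('a set \<Rightarrow> ennreal) \<Rightarrow> bool" where
  "quasi_capacity X0 c m \<longleftrightarrow> c \<ge> 1 \<and>
     (\<forall>A B. univ_meas A \<and> univ_meas B \<and> A \<subseteq> X0 \<and> B \<subseteq> X0 \<longrightarrow>
        (A \<subseteq> B \<longrightarrow> m A \<le> m B) \<and>
        m A = (SUP F \<in> {F. F \<subseteq> A \<and> closed F}. m F) \<and>
        m (A \<union> B) \<le> ennreal c * (m A + m B))"

definition HI :: "'a::metric_space set \<Rightarrow> ('a \<Rightarrow> 'a set \<Rightarrow> 'a measure) \<Rightarrow> bool" where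
  "HI X0 \<mu> \<longleftrightarrow> (\<exists>\<alpha>'. 0 < \<alpha>' \<and> \<alpha>' < 1 \<and> (\<exists>K \<ge> 1.
     \<forall>x0 \<in> X0. \<forall>R. 0 < R \<and> ereal R < R0 X0 x0 \<longrightarrow>
       (\<forall>h \<in> harmonic_bpos \<mu> (ball x0 R).
          (SUP y \<in> ball x0 (\<alpha>' * R). h y) \<le> K * (INF y \<in> ball x0 (\<alpha>' * R). h y))))"

definition HJ :: "'a::metric_space set \<Rightarrow> ('a \<Rightarrow> 'a set \<Rightarrow> 'a measure) \<Rightarrow> bool" where
  "HJ X0 \<mu> \<longleftrightarrow> (\<exists>\<alpha>'. 0 < \<alpha>' \<and> \<alpha>' < 1 \<and> (\<exists>cJ \<ge> 1.
     \<forall>x \<in> X0. \<forall>r. 0 < r \<and> ereal r < ereal \<alpha>' * R0 X0 x \<longrightarrow>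
       (\<forall>y \<in> ball x (\<alpha>'\<^sup>2 * r). \<forall>E \<in> sets borel. E \<subseteq> - ball x r \<longrightarrow>
          emeasure (\<mu> x (ball x (\<alpha>' * r))) E \<le> ennreal cJ * emeasure (\<mu> y (ball x r)) E)))"

end

theory Submission
  imports Defs
begin


lemma dom_int:
  fixes \<nu>1 \<nu>2 :: "'a::topological_space measure"
  assumes fm: "finite_measure \<nu>2" and s1: "sets \<nu>1 = sets borel" and s2: "sets \<nu>2 = sets borel"
    and G: "G \<in> sets borel"
    and dom: "\<And>E. E \<in> sets borel \<Longrightarrow> E \<subseteq> G \<Longrightarrow> emeasure \<nu>1 E \<le> k * emeasure \<nu>2 E"
    and h: "univ_meas_fun h"
  shows "(\<integral>\<^sup>+x. ennreal (h x) * indicator G x \<partial>\<nu>1) \<le> k * (\<integral>\<^sup>+x. ennreal (h x) * indicator G x \<partial>\<nu>2)"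
proof -
  define f where "f = (\<lambda>x. ennreal (h x) * indicator G x)"
  have hm: "h \<in> borel_measurable (completion \<nu>2)" using h fm s2 unfolding univ_meas_fun_def by blast
  have Gc: "G \<in> sets (completion \<nu>2)" using G s2 by auto
  have fm2: "f \<in> borel_measurable (completion \<nu>2)" unfolding f_def
    using hm Gc by measurable
  obtain g where g: "g \<in> borel_measurable \<nu>2" and gAE: "AE x in \<nu>2. f x = g x"
    using completion_ex_borel_measurable[OF fm2] by blast
  define g' where "g' = (\<lambda>x. g x * indicator G x)"
  have g'm: "g' \<in> borel_measurable \<nu>2" unfolding g'_def using g G s2 by measurable
  have AE2: "AE x in \<nu>2. f x = g' x"
    using gAE by eventually_elim (auto simp: f_def g'_def split: split_indicator)
  then obtain N where N: "{x \<in> space \<nu>2. \<not> f x = g' x} \<subseteq> N" "emeasure \<nu>2 N = 0" "N \<in> sets \<nu>2"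
    by (rule AE_E)
  have NG: "N \<inter> G \<in> sets borel" using N(3) G s2 by auto
  have "emeasure \<nu>2 (N \<inter> G) \<le> emeasure \<nu>2 N"
    using N(3) NG s2 by (intro emeasure_mono) auto
  then have "emeasure \<nu>2 (N \<inter> G) = 0" using N(2) by simp
  then have "emeasure \<nu>1 (N \<inter> G) = 0" using dom[OF NG] by simp
  then have NGnull: "N \<inter> G \<in> null_sets \<nu>1" using NG s1 by (auto simp: null_sets_def)
  have sp: "space \<nu>1 = UNIV" "space \<nu>2 = UNIV"
    using sets_eq_imp_space_eq[OF s1] sets_eq_imp_space_eq[OF s2] by auto
  have AE1: "AE x in \<nu>1. f x = g' x"
  proof (rule AE_I'[OF NGnull])
    show "{x \<in> space \<nu>1. \<not> f x = g' x} \<subseteq> N \<inter> G"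
      using N(1) sp by (auto simp: f_def g'_def split: split_indicator)
  qed
  have e1: "(\<integral>\<^sup>+x. f x \<partial>\<nu>1) = (\<integral>\<^sup>+x. g' x \<partial>\<nu>1)" using AE1 by (rule nn_integral_cong_AE)
  have e2: "(\<integral>\<^sup>+x. f x \<partial>\<nu>2) = (\<integral>\<^sup>+x. g' x \<partial>\<nu>2)" using AE2 by (rule nn_integral_cong_AE)
  have g1: "g \<in> borel_measurable \<nu>1" using g s1 s2 measurable_cong_sets[of \<nu>2 \<nu>1 borel borel] by simp
  have Gs1: "G \<in> sets \<nu>1" "G \<in> sets \<nu>2" using G s1 s2 by auto
  define d1 where "d1 = density \<nu>1 (indicator G)"
  define d2 where "d2 = density \<nu>2 (\<lambda>x. k * indicator G x)"
  have i1: "(\<integral>\<^sup>+x. g x \<partial>d1) = (\<integral>\<^sup>+x. g' x \<partial>\<nu>1)"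
    unfolding d1_def g'_def using g1 Gs1
    by (subst nn_integral_density) (auto simp: mult.commute intro!: nn_integral_cong)
  have i2: "(\<integral>\<^sup>+x. g x \<partial>d2) = k * (\<integral>\<^sup>+x. g' x \<partial>\<nu>2)"
  proof -
    have "(\<integral>\<^sup>+x. g x \<partial>d2) = (\<integral>\<^sup>+x. k * (g x * indicator G x) \<partial>\<nu>2)"
      unfolding d2_def using g Gs1
      by (subst nn_integral_density) (auto simp: mult_ac intro!: nn_integral_cong)
    also have "\<dots> = k * (\<integral>\<^sup>+x. g x * indicator G x \<partial>\<nu>2)"
      using g Gs1 by (intro nn_integral_cmult borel_measurable_times_ennreal borel_measurable_indicator)
    finally show ?thesis unfolding g'_def .
  qed
  have sd: "sets d1 = sets d2" unfolding d1_def d2_def using s1 s2 by simp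
  have "d1 \<le> d2"
    unfolding le_measure_iff
  proof -
    have "emeasure d1 A \<le> emeasure d2 A" for A
    proof (cases "A \<in> sets borel")
      case True
      have Am: "A \<in> sets \<nu>1" "A \<in> sets \<nu>2" using True s1 s2 by auto
      have im1: "indicator G \<in> borel_measurable \<nu>1" using Gs1(1) by (rule borel_measurable_indicator)
      have im2: "(\<lambda>x. k * indicator G x) \<in> borel_measurable \<nu>2"
        using Gs1(2) by (intro borel_measurable_times_ennreal borel_measurable_const borel_measurable_indicator)
      have "emeasure d1 A = (\<integral>\<^sup>+x. indicator G x * indicator A x \<partial>\<nu>1)"
        unfolding d1_def by (rule emeasure_density[OF im1 Am(1)])
      also have "\<dots> = (\<integral>\<^sup>+x. indicator (A \<inter> G) x \<partial>\<nu>1)"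
        by (intro nn_integral_cong) (simp split: split_indicator)
      also have "\<dots> = emeasure \<nu>1 (A \<inter> G)" using Am Gs1 by (intro nn_integral_indicator) auto
      also have "\<dots> \<le> k * emeasure \<nu>2 (A \<inter> G)" using dom[of "A \<inter> G"] True G by auto
      also have "\<dots> = (\<integral>\<^sup>+x. k * indicator (A \<inter> G) x \<partial>\<nu>2)"
        using Am Gs1 by (intro nn_integral_cmult_indicator[symmetric]) auto
      also have "\<dots> = (\<integral>\<^sup>+x. k * indicator G x * indicator A x \<partial>\<nu>2)"
        by (intro nn_integral_cong) (simp split: split_indicator)
      also have "\<dots> = emeasure d2 A"
        unfolding d2_def by (rule emeasure_density[OF im2 Am(2), symmetric])
      finally show ?thesis .
    next
      case False
      then show ?thesis unfolding d1_def using s1 by (simp add: emeasure_notin_sets)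
    qed
    then show "if space d1 = space d2 then if sets d1 = sets d2 then emeasure d1 \<le> emeasure d2 else sets d1 \<subseteq> sets d2 else space d1 \<subseteq> space d2"
      using sd sets_eq_imp_space_eq[OF sd] by (simp add: le_fun_def)
  qed
  then have "(\<integral>\<^sup>+x. g x \<partial>d1) \<le> (\<integral>\<^sup>+x. g x \<partial>d2)" by (rule nn_integral_mono_measure[OF sd])
  then show ?thesis using e1 e2 i1 i2 unfolding f_def by simp
qed



locale setting =
  fixes X0 :: "'a::{metric_space, second_countable_topology} set"
    and \<mu> :: "'a \<Rightarrow> 'a set \<Rightarrow> 'a measure"
    and m :: "'a set \<Rightarrow> ennreal" and m0 :: "real \<Rightarrow> real"
    and c c0 \<alpha> a \<eta> :: real
  assumes X0: "open X0"
    and M0_sets: "\<And>x U. U \<in> calU X0 \<Longrightarrow> sets (\<mu> x U) = sets borel"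
    and M0_null: "\<And>x U. U \<in> calU X0 \<Longrightarrow> emeasure (\<mu> x U) U = 0"
    and M0_norm: "\<And>x U. U \<in> calU X0 \<Longrightarrow> emeasure (\<mu> x U) UNIV \<le> 1"
    and M0_out: "\<And>x U E. U \<in> calU X0 \<Longrightarrow> x \<notin> U \<Longrightarrow> E \<in> sets borel \<Longrightarrow>
                 emeasure (\<mu> x U) E = indicator E x"
    and M1_meas: "\<And>U E. U \<in> calU X0 \<Longrightarrow> E \<in> sets borel \<Longrightarrow>
                     univ_meas_fun (\<lambda>y. measure (\<mu> y U) E)"
    and M1_balayage: "\<And>x U V E. U \<in> calU X0 \<Longrightarrow> V \<in> calU X0 \<Longrightarrow> V \<subseteq> U \<Longrightarrow> E \<in> sets borel \<Longrightarrow>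
                     emeasure (\<mu> x U) E = (\<integral>\<^sup>+ y. emeasure (\<mu> y U) E \<partial>completion (\<mu> x V))"
    and cap: "quasi_capacity X0 c m"
    and m0_pos: "\<And>r. r > 0 \<Longrightarrow> m0 r > 0"
    and m0_mono: "mono_on {0<..} m0"
    and params: "0 < \<alpha>" "\<alpha> < 1/3" "0 < a" "a < 1/3" "0 < \<eta>" "\<eta> < 1/3" "c0 \<ge> 1"
    and T: "\<And>x r. x \<in> X0 \<Longrightarrow> 0 < r \<Longrightarrow> ereal r < R0 X0 x \<Longrightarrow>
              ennreal (m0 r / c0) \<le> m (ball x r) \<and> m (ball x r) \<le> ennreal (c0 * m0 r)"
    and SC1: "\<And>r. r > 0 \<Longrightarrow> a * m0 r \<le> m0 (\<alpha> * r)"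
    and KS: "\<And>x r y F. x \<in> X0 \<Longrightarrow> 0 < r \<Longrightarrow> ereal r < R0 X0 x \<Longrightarrow> y \<in> ball x (\<alpha> * r) \<Longrightarrow>
               closed F \<Longrightarrow> F \<subseteq> ball x (\<alpha> * r) \<Longrightarrow>
               emeasure (\<mu> y (ball x r - F)) F \<ge> ennreal \<eta> * m F / m (ball x r)"
begin

lemma c_ge1: "c \<ge> 1" using cap unfolding quasi_capacity_def by auto

lemma R0_lemma:
  assumes "ereal R < R0 X0 x0" "dist x0 y + s \<le> R" "0 < s"
  shows "ereal s < R0 X0 y" "closure (ball y s) \<subseteq> X0"
proof -
  obtain e where e: "e \<in> {ereal r | r. r > 0 \<and> closure (ball x0 r) \<subseteq> X0}" "ereal R < e"
    using assms(1) unfolding R0_def by (auto simp: less_Sup_iff)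
  then obtain R' where R': "e = ereal R'" "R' > 0" "closure (ball x0 R') \<subseteq> X0" by auto
  with e have RR: "R < R'" by simp
  define s' where "s' = s + (R' - R) / 2"
  have sub: "closure (ball y s') \<subseteq> X0"
  proof -
    have "closure (ball y s') \<subseteq> cball y s'" by (rule closure_minimal[OF ball_subset_cball closed_cball])
    also have "\<dots> \<subseteq> ball x0 R'"
    proof
      fix z assume "z \<in> cball y s'"
      then have "dist x0 z \<le> dist x0 y + dist y z" "dist y z \<le> s'" using dist_triangle by auto
      then have "dist x0 z < R'" using assms(2) RR unfolding s'_def by (simp add: field_simps)
      then show "z \<in> ball x0 R'" by simp
    qed
    also have "\<dots> \<subseteq> closure (ball x0 R')" by (rule closure_subset)
    finally show ?thesis using R' by auto
  qed
  have "ereal s' \<in> {ereal r | r. r > 0 \<and> closure (ball y r) \<subseteq> X0}"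
  proof -
    have "0 < s'" unfolding s'_def using assms(3) RR by (smt (z3) field_sum_of_halves)
    then show ?thesis using sub by auto
  qed
  moreover have "ereal s < ereal s'" using RR unfolding s'_def by simp
  ultimately show "ereal s < R0 X0 y" unfolding R0_def by (auto simp: less_Sup_iff)
  have "closure (ball y s) \<subseteq> closure (ball y s')" using RR
    by (intro closure_mono) (auto simp: s'_def field_simps)
  then show "closure (ball y s) \<subseteq> X0" using sub by auto
qed

lemma calU_mono: "Y \<subseteq> Z \<Longrightarrow> calU Y \<subseteq> calU Z" unfolding calU_def by auto

lemma sp: "U \<in> calU X0 \<Longrightarrow> space (\<mu> x U) = UNIV"
  using sets_eq_imp_space_eq[OF M0_sets] by simp

lemma finite_mu: assumes "U \<in> calU X0" shows "finite_measure (\<mu> x U)"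
proof (rule finite_measureI)
  have "emeasure (\<mu> x U) UNIV < top" using M0_norm[OF assms] by (rule le_less_trans) simp
  then show "emeasure (\<mu> x U) (space (\<mu> x U)) \<noteq> \<infinity>" using sp[OF assms] by simp
qed

lemma univ_meas_borel: "A \<in> sets borel \<Longrightarrow> univ_meas A"
  unfolding univ_meas_def by auto

lemma mu_meas: "univ_meas_fun h \<Longrightarrow> U \<in> calU X0 \<Longrightarrow> h \<in> borel_measurable (completion (\<mu> x U))"
  unfolding univ_meas_fun_def using finite_mu M0_sets by blast

lemma HM:
  assumes "h \<in> harmonic \<mu> U" "\<And>y. 0 \<le> h y" "V \<in> calU U" "V \<in> calU X0" "x \<in> V"
  shows "ennreal (h x) = (\<integral>\<^sup>+y. ennreal (h y) \<partial>\<mu> x V)"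
proof -
  have i: "integrable (completion (\<mu> x V)) h" and e: "integral\<^sup>L (completion (\<mu> x V)) h = h x"
    using assms unfolding harmonic_def by auto
  have "(\<integral>\<^sup>+y. ennreal (h y) \<partial>completion (\<mu> x V)) = ennreal (integral\<^sup>L (completion (\<mu> x V)) h)"
    using i assms(2) by (intro nn_integral_eq_integral) auto
  then show ?thesis using e by (simp add: nn_integral_completion)
qed

lemma calU_X0: "closure U \<subseteq> X0 \<Longrightarrow> V \<in> calU U \<Longrightarrow> V \<in> calU X0"
  unfolding calU_def using closure_subset by blast

lemma emeasure_le1: assumes "U \<in> calU X0" shows "emeasure (\<mu> x U) E \<le> 1"
proof -
  have "emeasure (\<mu> x U) E \<le> emeasure (\<mu> x U) (space (\<mu> x U))" by (rule emeasure_space)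
  also have "\<dots> \<le> 1" using M0_norm[OF assms] sp[OF assms] by simp
  finally show ?thesis .
qed

lemma ennreal_measure_mu: "U \<in> calU X0 \<Longrightarrow> ennreal (measure (\<mu> x U) E) = emeasure (\<mu> x U) E"
  using finite_measure.emeasure_eq_measure[OF finite_mu] by simp

lemma measure_le1: "U \<in> calU X0 \<Longrightarrow> measure (\<mu> x U) E \<le> 1"
  using emeasure_le1[of U x E] ennreal_measure_mu[of U x E] by (metis ennreal_le_1)

lemma mono_out:
  assumes U: "U \<in> calU X0" and V: "V \<in> calU X0" and VU: "V \<subseteq> U" and E: "E \<in> sets borel"
    and EU: "E \<inter> U = {}"
  shows "emeasure (\<mu> x V) E \<le> emeasure (\<mu> x U) E"
proof -
  have "emeasure (\<mu> x V) E = (\<integral>\<^sup>+ z. indicator E z \<partial>completion (\<mu> x V))"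
    using E M0_sets[OF V] by (subst nn_integral_indicator) auto
  also have "\<dots> \<le> (\<integral>\<^sup>+ z. emeasure (\<mu> z U) E \<partial>completion (\<mu> x V))"
  proof (intro nn_integral_mono)
    fix z show "indicator E z \<le> emeasure (\<mu> z U) E"
    proof (cases "z \<in> U")
      case True then have "z \<notin> E" using EU by auto
      then show ?thesis by simp
    next
      case False then show ?thesis using M0_out[OF U False E] by simp
    qed
  qed
  also have "\<dots> = emeasure (\<mu> x U) E" by (rule M1_balayage[OF U V VU E, symmetric])
  finally show ?thesis .
qed

lemma finite_completion: "finite_measure M \<Longrightarrow> finite_measure (completion M)"
  by (rule finite_measureI) (simp add: finite_measure.emeasure_finite)

lemma harm_meas:
  assumes U: "U \<in> calU X0" and E: "E \<in> sets borel"
  shows "(\<lambda>z. measure (\<mu> z U) E) \<in> harmonic_bpos \<mu> U"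
proof -
  let ?h = "\<lambda>z. measure (\<mu> z U) E"
  have um: "univ_meas_fun ?h" by (rule M1_meas[OF U E])
  have clU: "closure U \<subseteq> X0" using U unfolding calU_def by auto
  have harm: "integrable (completion (\<mu> z V)) ?h \<and> integral\<^sup>L (completion (\<mu> z V)) ?h = ?h z"
    if V: "V \<in> calU U" and z: "z \<in> V" for V z
  proof -
    have V0: "V \<in> calU X0" using calU_X0[OF clU V] .
    have VU: "V \<subseteq> U" using V closure_subset unfolding calU_def by blast
    interpret fm: finite_measure "completion (\<mu> z V)" by (rule finite_completion[OF finite_mu[OF V0]])
    have hm: "?h \<in> borel_measurable (completion (\<mu> z V))" by (rule mu_meas[OF um V0])
    have int: "integrable (completion (\<mu> z V)) ?h"
      by (rule fm.integrable_const_bound[where B=1]) (use hm measure_le1[OF U] in auto)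
    have "ennreal (integral\<^sup>L (completion (\<mu> z V)) ?h) = (\<integral>\<^sup>+y. ennreal (?h y) \<partial>completion (\<mu> z V))"
      using int by (intro nn_integral_eq_integral[symmetric]) auto
    also have "\<dots> = (\<integral>\<^sup>+y. emeasure (\<mu> y U) E \<partial>completion (\<mu> z V))"
      using ennreal_measure_mu[OF U] by simp
    also have "\<dots> = emeasure (\<mu> z U) E" by (rule M1_balayage[OF U V0 VU E, symmetric])
    also have "\<dots> = ennreal (?h z)" using ennreal_measure_mu[OF U] by simp
    finally have "integral\<^sup>L (completion (\<mu> z V)) ?h = ?h z"
      by (subst (asm) ennreal_inj) (auto intro!: integral_nonneg_AE)
    with int show ?thesis by simp
  qed
  have "bounded (range ?h)"
    unfolding bounded_iff using measure_le1[OF U] by (intro exI[of _ 1]) auto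
  then show ?thesis using um harm unfolding harmonic_bpos_def harmonic_def by auto
qed

lemma ereal_lt_scale:
  assumes "0 < r" "0 < \<beta>" "\<beta> \<le> 1" "ereal r < ereal \<beta> * t"
  shows "ereal r < t"
proof (cases t)
  case (real t')
  then have "r < \<beta> * t'" using assms by simp
  moreover have "t' > 0"
  proof (rule ccontr)
    assume "\<not> t' > 0"
    then have "\<beta> * t' \<le> 0" using assms(2) by (simp add: mult_nonneg_nonpos)
    then show False using \<open>r < \<beta> * t'\<close> assms(1) by simp
  qed
  moreover have "\<beta> * t' \<le> 1 * t'" using assms(3) \<open>t' > 0\<close> by (intro mult_right_mono) auto
  ultimately have "r < t'" by linarith
  then show ?thesis using real by simp
next
  case PInf then show ?thesis by simp
next
  case MInf then show ?thesis using assms by simp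
qed

lemma bdry_HJ:
  assumes B: "\<forall>x \<in> X0. \<forall>r. 0 < r \<and> ereal r < R0 X0 x \<longrightarrow>
              emeasure (\<mu> x (ball x r)) (- frontier (ball x r)) = 0"
  shows "HJ X0 \<mu>"
  unfolding HJ_def
proof (rule exI[of _ "1/2"], intro conjI exI[of _ "1::real"] ballI allI impI)
  fix x r y E assume x: "x \<in> X0" and r: "0 < r \<and> ereal r < ereal (1/2) * R0 X0 x"
    and y: "y \<in> ball x ((1/2)\<^sup>2 * r)" and E: "E \<in> sets borel" "E \<subseteq> - ball x r"
  have "ereal r < R0 X0 x" using r ereal_lt_scale[of r "1/2"] by auto
  moreover have "ereal (1/2 * r) < ereal r" using r by simp
  ultimately have r2: "ereal (1/2 * r) < R0 X0 x" by (metis order.strict_trans)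
  have r2p: "0 < 1/2 * r" using r by simp
  have cl: "closure (ball x (1/2 * r)) \<subseteq> X0" using R0_lemma(2)[OF r2, of x] r2p by simp
  have Uc: "ball x (1/2 * r) \<in> calU X0" using cl unfolding calU_def by auto
  have fr: "frontier (ball x (1/2 * r)) \<subseteq> ball x r"
  proof -
    have "frontier (ball x (1/2 * r)) \<subseteq> closure (ball x (1/2 * r))" by (simp add: frontier_def)
    also have "\<dots> \<subseteq> cball x (1/2*r)" by (rule closure_minimal[OF ball_subset_cball closed_cball])
    also have "\<dots> \<subseteq> ball x r" using r by (auto simp: field_simps)
    finally show ?thesis .
  qed
  have "emeasure (\<mu> x (ball x (1/2 * r))) E \<le> emeasure (\<mu> x (ball x (1/2 * r))) (- frontier (ball x (1/2 * r)))"
    using E fr M0_sets[OF Uc] by (intro emeasure_mono) auto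
  also have "\<dots> = 0" using B x r2 r2p by auto
  finally have z: "emeasure (\<mu> x (ball x (1/2 * r))) E \<le> 0" .
  show "emeasure (\<mu> x (ball x (1/2 * r))) E \<le> ennreal 1 * emeasure (\<mu> y (ball x r)) E"
    using z by simp
next
  show "(0::real) < 1/2" by simp
next
  show "(1::real)/2 < 1" by simp
next
  show "(1::real) \<le> 1" by simp
qed

lemma HI_HJ:
  assumes "HI X0 \<mu>"
  shows "HJ X0 \<mu>"
proof -
  obtain \<beta> K where b: "0 < \<beta>" "\<beta> < 1" and K: "K \<ge> 1"
    and H: "\<And>x0 R h. x0 \<in> X0 \<Longrightarrow> 0 < R \<Longrightarrow> ereal R < R0 X0 x0 \<Longrightarrow> h \<in> harmonic_bpos \<mu> (ball x0 R) \<Longrightarrow>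
          (SUP y \<in> ball x0 (\<beta> * R). h y) \<le> K * (INF y \<in> ball x0 (\<beta> * R). h y)"
    using assms unfolding HI_def by metis
  show ?thesis unfolding HJ_def
  proof (rule exI[of _ \<beta>], intro conjI exI[of _ K] ballI allI impI)
    fix x r y E assume x: "x \<in> X0" and r: "0 < r \<and> ereal r < ereal \<beta> * R0 X0 x"
      and y: "y \<in> ball x (\<beta>\<^sup>2 * r)" and E: "E \<in> sets borel" "E \<subseteq> - ball x r"
    have rR: "ereal r < R0 X0 x" using r ereal_lt_scale[of r \<beta>] b by auto
    have cl: "closure (ball x r) \<subseteq> X0" using R0_lemma(2)[OF rR, of x] r by simp
    have U: "ball x r \<in> calU X0" using cl unfolding calU_def by auto
    have br: "\<beta> * r > 0" using b r by simp
    have cl2: "closure (ball x (\<beta> * r)) \<subseteq> closure (ball x r)"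
      using b r by (intro closure_mono) (auto simp: mult_le_cancel_right1 less_le_trans)
    have V: "ball x (\<beta> * r) \<in> calU X0" using cl cl2 unfolding calU_def by auto
    have VU: "ball x (\<beta> * r) \<subseteq> ball x r" using b r by (auto simp: mult_le_cancel_right1 less_le_trans)
    let ?h = "\<lambda>z. measure (\<mu> z (ball x r)) E"
    have hb: "?h \<in> harmonic_bpos \<mu> (ball x r)" by (rule harm_meas[OF U E(1)])
    have S: "(SUP y \<in> ball x (\<beta> * r). ?h y) \<le> K * (INF y \<in> ball x (\<beta> * r). ?h y)"
      by (rule H[OF x _ rR hb]) (use r in auto)
    have xin: "x \<in> ball x (\<beta> * r)" using br by simp
    have "\<beta>\<^sup>2 * r \<le> \<beta> * r" using b r by (simp add: power2_eq_square)
    then have yin: "y \<in> ball x (\<beta> * r)" using y by auto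
    have h1: "?h x \<le> (SUP y \<in> ball x (\<beta> * r). ?h y)"
      by (rule cSUP_upper[OF xin]) (use measure_le1[OF U] in \<open>auto simp: bdd_above_def\<close>)
    have h2: "(INF y \<in> ball x (\<beta> * r). ?h y) \<le> ?h y"
      by (rule cINF_lower[OF _ yin]) (auto simp: bdd_below_def intro!: exI[of _ 0])
    have "K * (INF y \<in> ball x (\<beta> * r). ?h y) \<le> K * ?h y"
      using h2 K by (intro mult_left_mono) auto
    then have hxy: "?h x \<le> K * ?h y" using h1 S by linarith
    have "emeasure (\<mu> x (ball x (\<beta> * r))) E \<le> emeasure (\<mu> x (ball x r)) E"
      using E by (intro mono_out[OF U V VU E(1)]) auto
    also have "\<dots> = ennreal (?h x)" using ennreal_measure_mu[OF U] by simp
    also have "\<dots> \<le> ennreal (K * ?h y)" using hxy by (rule ennreal_leI)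
    also have "\<dots> = ennreal K * emeasure (\<mu> y (ball x r)) E"
      using ennreal_measure_mu[OF U] K by (simp add: ennreal_mult)
    finally show "emeasure (\<mu> x (ball x (\<beta> * r))) E \<le> ennreal K * emeasure (\<mu> y (ball x r)) E" .
  next
    show "0 < \<beta>" by (rule b(1))
  next
    show "\<beta> < 1" by (rule b(2))
  next
    show "1 \<le> K" by (rule K)
  qed
qed

end


context setting begin

lemma m0_le: "0 < x \<Longrightarrow> x \<le> y \<Longrightarrow> m0 x \<le> m0 y"
  using mono_onD[OF m0_mono, of x y] by auto

lemma exN: "\<exists>N::nat. \<alpha> ^ N \<le> a \<and> N \<ge> 1"
proof -
  obtain n where "\<alpha> ^ n < a" using real_arch_pow_inv[of a \<alpha>] params by auto
  moreover have "\<alpha> ^ Suc n \<le> \<alpha> ^ n" using params by (intro power_decreasing) auto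
  ultimately show ?thesis by (intro exI[of _ "Suc n"]) auto
qed

lemma PL_aux:
  assumes N: "\<alpha> ^ N \<le> a"
  shows "\<forall>lam r. \<alpha> ^ k < lam \<longrightarrow> lam \<le> 1 \<longrightarrow> 0 < r \<longrightarrow> a * lam ^ N * m0 r \<le> m0 (lam * r)"
proof (induction k)
  case 0 then show ?case by auto
next
  case (Suc k)
  show ?case
  proof (intro allI impI)
    fix lam r :: real assume l: "\<alpha> ^ Suc k < lam" "lam \<le> 1" and r: "0 < r"
    have lpos: "0 < lam" using l(1) params by (smt (verit) zero_less_power)
    have m0r: "0 < m0 r" using m0_pos r by auto
    show "a * lam ^ N * m0 r \<le> m0 (lam * r)"
    proof (cases "\<alpha> < lam")
      case True
      have "a * lam ^ N * m0 r \<le> a * 1 * m0 r"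
        using lpos l(2) params m0r by (intro mult_right_mono mult_left_mono power_le_one) auto
      also have "\<dots> \<le> m0 (\<alpha> * r)" using SC1[OF r] by simp
      also have "\<dots> \<le> m0 (lam * r)" using True r params by (intro m0_le) auto
      finally show ?thesis .
    next
      case False
      define l' where "l' = lam / \<alpha>"
      have l'1: "\<alpha> ^ k < l'" using l(1) params unfolding l'_def by (simp add: field_simps)
      have l'2: "l' \<le> 1" using False params unfolding l'_def by (simp add: field_simps)
      have l'pos: "0 < l'" using lpos params unfolding l'_def by simp
      have IH: "a * l' ^ N * m0 r \<le> m0 (l' * r)" using Suc.IH l'1 l'2 r by blast
      have lamq: "lam = \<alpha> * l'" using params unfolding l'_def by simp
      have "lam ^ N = \<alpha> ^ N * l' ^ N" unfolding lamq by (simp add: power_mult_distrib)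
      also have "\<dots> \<le> a * l' ^ N" using N l'pos by (intro mult_right_mono) auto
      finally have "a * lam ^ N * m0 r \<le> a * (a * l' ^ N) * m0 r"
        using params m0r by (intro mult_right_mono mult_left_mono) auto
      also have "\<dots> = a * (a * l' ^ N * m0 r)" by simp
      also have "\<dots> \<le> a * m0 (l' * r)" using IH params by (intro mult_left_mono) auto
      also have "\<dots> \<le> m0 (\<alpha> * (l' * r))" using SC1[of "l' * r"] l'pos r by simp
      also have "\<dots> = m0 (lam * r)" unfolding lamq by (simp add: mult.assoc)
      finally show ?thesis .
    qed
  qed
qed

lemma PL:
  assumes N: "\<alpha> ^ N \<le> a" and l: "0 < lam" "lam \<le> 1" and r: "0 < r"
  shows "a * lam ^ N * m0 r \<le> m0 (lam * r)"
proof -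
  obtain k where "\<alpha> ^ k < lam" using real_arch_pow_inv[of lam \<alpha>] l params by auto
  then show ?thesis using PL_aux[OF N, of k] l r by blast
qed

lemma in_X0: "ereal R < R0 X0 x0 \<Longrightarrow> 0 < R \<Longrightarrow> closure (ball x0 R) \<subseteq> X0"
  using R0_lemma(2)[of R x0 x0 R] by simp

lemma m_mono: "A \<in> sets borel \<Longrightarrow> B \<in> sets borel \<Longrightarrow> A \<subseteq> B \<Longrightarrow> B \<subseteq> X0 \<Longrightarrow> m A \<le> m B"
  using cap univ_meas_borel unfolding quasi_capacity_def by blast

lemma CL:
  assumes x0: "x0 \<in> X0" and R: "0 < R" "ereal R < R0 X0 x0"
    and h: "h \<in> harmonic_bpos \<mu> (ball x0 R)"
    and z: "z \<in> ball x0 (\<alpha>*R/16)"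
    and G: "closed G" "G \<subseteq> ball x0 (\<alpha>*R/8)" and t: "0 < t" and hG: "\<forall>y\<in>G. t \<le> h y"
  shows "m G \<le> ennreal (h z * c0 * m0 (R/2) / (\<eta> * t))"
proof -
  have hnn: "\<And>y. 0 \<le> h y" and hh: "h \<in> harmonic \<mu> (ball x0 R)"
    using h unfolding harmonic_bpos_def by auto
  have clB: "closure (ball x0 R) \<subseteq> X0" using in_X0[OF R(2) R(1)] .
  have dz: "dist x0 z < \<alpha>*R/16" using z by simp
  have aR: "0 < \<alpha> * R" "\<alpha> * R < R" using params R by auto
  have dz2: "dist x0 z + R/2 < R" using dz aR by argo
  have R2p: "0 < R/2" using R by simp
  have R2: "ereal (R/2) < R0 X0 z" by (rule R0_lemma(1)[OF R(2) less_imp_le[OF dz2] R2p])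
  have "dist x0 z < R" using dz aR by argo
  then have zX: "z \<in> X0" using clB closure_subset[of "ball x0 R"] by auto
  have Gsub: "G \<subseteq> ball z (\<alpha> * (R/2))"
  proof
    fix g assume "g \<in> G"
    then have "dist x0 g < \<alpha>*R/8" using G by auto
    moreover have "dist z g \<le> dist x0 z + dist x0 g" by (metis dist_commute dist_triangle)
    moreover have "\<alpha> * (R/2) = \<alpha> * R / 2" by simp
    ultimately show "g \<in> ball z (\<alpha> * (R/2))" using dz aR by simp
  qed
  have zin: "z \<in> ball z (\<alpha> * (R/2))" using params R by simp
  have KSz: "emeasure (\<mu> z (ball z (R/2) - G)) G \<ge> ennreal \<eta> * m G / m (ball z (R/2))"
    using KS[OF zX _ R2 zin G(1) Gsub] R by simp
  have Tz: "ennreal (m0 (R/2) / c0) \<le> m (ball z (R/2))" "m (ball z (R/2)) \<le> ennreal (c0 * m0 (R/2))"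
    using T[OF zX _ R2] R by auto
  have "\<alpha> * (R/2) \<le> 1 * (R/2)" by (rule mult_right_mono) (use params R in auto)
  then have GB: "G \<subseteq> ball z (R/2)" using Gsub subset_ball[of "\<alpha> * (R/2)" "R/2" z] by auto
  have "closure (ball z (R/2)) \<subseteq> X0" by (rule R0_lemma(2)[OF R(2) less_imp_le[OF dz2] R2p])
  then have BX: "ball z (R/2) \<subseteq> X0" using closure_subset by blast
  have mGB: "m G \<le> m (ball z (R/2))" using G(1) GB BX by (intro m_mono) auto
  have m0p: "0 < m0 (R/2)" using m0_pos R by simp
  define b where "b = enn2real (m (ball z (R/2)))"
  define g where "g = enn2real (m G)"
  have fin: "m (ball z (R/2)) < top" using Tz(2) by (simp add: le_less_trans)
  have bq: "m (ball z (R/2)) = ennreal b" unfolding b_def using fin by simp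
  have gq: "m G = ennreal g" unfolding g_def using fin mGB by (simp add: le_less_trans)
  have b0: "0 \<le> b" unfolding b_def by simp
  have b1: "m0 (R/2) / c0 \<le> b" using Tz(1) unfolding bq by (simp add: ennreal_le_iff[OF b0])
  have b2: "b \<le> c0 * m0 (R/2)" using Tz(2) bq params m0p by simp
  have "0 < m0 (R/2) / c0" using m0p params by simp
  then have bpos: "0 < b" using b1 by linarith
  have gb: "g \<le> b" using mGB unfolding bq gq by (simp add: ennreal_le_iff[OF b0])
  have g0: "0 \<le> g" unfolding g_def by simp
  have "g \<le> h z * c0 * m0 (R/2) / (\<eta> * t)"
  proof (cases "z \<in> G")
    case True
    then have tz: "t \<le> h z" using hG by auto
    have "\<eta> * t \<le> 1 * t" by (rule mult_right_mono) (use params t in auto)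
    then have "\<eta> * t \<le> h z" using tz by simp
    then have "1 \<le> h z / (\<eta> * t)" using params t by (subst le_divide_eq_1_pos) auto
    then have "1 * (c0 * m0 (R/2)) \<le> h z / (\<eta> * t) * (c0 * m0 (R/2))"
      by (rule mult_right_mono) (use params m0p in auto)
    moreover have "h z / (\<eta> * t) * (c0 * m0 (R/2)) = h z * c0 * m0 (R/2) / (\<eta> * t)" by simp
    ultimately show ?thesis using gb b2 by linarith
  next
    case False
    define V where "V = ball z (R/2) - G"
    have Vo: "open V" unfolding V_def using G(1) by auto
    have "closure V \<subseteq> cball z (R/2)" unfolding V_def
      by (rule order_trans[OF closure_mono closure_minimal[OF ball_subset_cball closed_cball]]) auto
    also have "\<dots> \<subseteq> ball x0 R"
    proof
      fix y assume "y \<in> cball z (R/2)"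
      then have "dist z y \<le> R/2" by simp
      moreover have "dist x0 y \<le> dist x0 z + dist z y" by (rule dist_triangle)
      ultimately show "y \<in> ball x0 R" using dz2 by simp
    qed
    finally have VU: "V \<in> calU (ball x0 R)" using Vo unfolding calU_def by auto
    have VX: "V \<in> calU X0" by (rule calU_X0[OF clB VU])
    have zV: "z \<in> V" unfolding V_def using False R by simp
    have Gs: "G \<in> sets (\<mu> z V)" using M0_sets[OF VX] G(1) by simp
    have "ennreal (h z) = (\<integral>\<^sup>+y. ennreal (h y) \<partial>\<mu> z V)" by (rule HM[OF hh hnn VU VX zV])
    also have "\<dots> \<ge> (\<integral>\<^sup>+y. ennreal t * indicator G y \<partial>\<mu> z V)"
      by (intro nn_integral_mono) (use hG in \<open>auto split: split_indicator intro!: ennreal_leI\<close>)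
    also have "(\<integral>\<^sup>+y. ennreal t * indicator G y \<partial>\<mu> z V) = ennreal t * emeasure (\<mu> z V) G"
      by (rule nn_integral_cmult_indicator[OF Gs])
    finally have "ennreal t * emeasure (\<mu> z V) G \<le> ennreal (h z)" .
    moreover have "ennreal t * (ennreal \<eta> * m G / m (ball z (R/2))) \<le> ennreal t * emeasure (\<mu> z V) G"
      using KSz unfolding V_def by (intro mult_left_mono) auto
    moreover have "ennreal \<eta> * m G / m (ball z (R/2)) = ennreal (\<eta> * g / b)"
      unfolding gq bq using params bpos g0 by (simp add: ennreal_mult[symmetric] divide_ennreal)
    moreover have "ennreal (t * (\<eta> * g / b)) = ennreal t * ennreal (\<eta> * g / b)"
      using t params g0 bpos by (intro ennreal_mult) auto
    ultimately have "ennreal (t * (\<eta> * g / b)) \<le> ennreal (h z)"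
      by (metis order_trans)
    then have i: "t * (\<eta> * g / b) \<le> h z" using hnn by (simp add: ennreal_le_iff)
    then have "g \<le> h z * b / (\<eta> * t)" using t params bpos by (simp add: field_simps)
    also have "\<dots> \<le> h z * (c0 * m0 (R/2)) / (\<eta> * t)"
      using b2 hnn t params by (intro divide_right_mono mult_left_mono) auto
    finally show ?thesis by (simp add: mult.assoc)
  qed
  then show ?thesis unfolding gq by (intro ennreal_leI)
qed

end


context setting begin

lemma cap_union: "univ_meas A \<Longrightarrow> univ_meas B \<Longrightarrow> A \<subseteq> X0 \<Longrightarrow> B \<subseteq> X0 \<Longrightarrow> m (A \<union> B) \<le> ennreal c * (m A + m B)"
  using cap unfolding quasi_capacity_def by blast

lemma cap_inner: "univ_meas A \<Longrightarrow> A \<subseteq> X0 \<Longrightarrow> m A = (SUP F \<in> {F. F \<subseteq> A \<and> closed F}. m F)"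
  using cap unfolding quasi_capacity_def by blast

lemma um_ge: fixes h :: "'a \<Rightarrow> real" assumes "univ_meas_fun h" "D \<in> sets borel" shows "univ_meas {y\<in>D. t \<le> h y}"
  unfolding univ_meas_def
proof (intro allI impI)
  fix M :: "'a measure" assume M: "finite_measure M \<and> sets M = sets borel"
  then have hm: "h \<in> borel_measurable (completion M)" using assms(1) unfolding univ_meas_fun_def by blast
  have sp: "space (completion M) = UNIV" using M sets_eq_imp_space_eq[of M borel] by simp
  have "{y \<in> space (completion M). t \<le> h y} \<in> sets (completion M)" using hm by measurable
  moreover have "D \<in> sets (completion M)" using assms(2) M by simp
  ultimately have I: "D \<inter> {y \<in> space (completion M). t \<le> h y} \<in> sets (completion M)" by (rule sets.Int[rotated])
  have "{y\<in>D. t \<le> h y} = D \<inter> {y \<in> space (completion M). t \<le> h y}" using sp by blast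
  then show "{y\<in>D. t \<le> h y} \<in> sets (completion M)" using I by simp
qed

lemma um_lt: fixes h :: "'a \<Rightarrow> real" assumes "univ_meas_fun h" "D \<in> sets borel" shows "univ_meas {y\<in>D. \<not> t \<le> h y}"
  unfolding univ_meas_def
proof (intro allI impI)
  fix M :: "'a measure" assume M: "finite_measure M \<and> sets M = sets borel"
  then have hm: "h \<in> borel_measurable (completion M)" using assms(1) unfolding univ_meas_fun_def by blast
  have sp: "space (completion M) = UNIV" using M sets_eq_imp_space_eq[of M borel] by simp
  have "{y \<in> space (completion M). \<not> t \<le> h y} \<in> sets (completion M)" using hm by measurable
  moreover have "D \<in> sets (completion M)" using assms(2) M by simp
  ultimately have I: "D \<inter> {y \<in> space (completion M). \<not> t \<le> h y} \<in> sets (completion M)" by (rule sets.Int[rotated])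
  have "{y\<in>D. \<not> t \<le> h y} = D \<inter> {y \<in> space (completion M). \<not> t \<le> h y}" using sp by blast
  then show "{y\<in>D. \<not> t \<le> h y} \<in> sets (completion M)" using I by simp
qed

lemma ereal_div_lt:
  assumes "0 < \<beta>" "ereal (\<rho> / \<beta>) < t" shows "ereal \<rho> < ereal \<beta> * t"
proof (cases t)
  case (real t')
  then have "\<rho> / \<beta> < t'" using assms by simp
  then have "\<rho> < \<beta> * t'" using assms(1) by (simp add: divide_less_eq mult.commute)
  then show ?thesis using real by simp
next
  case PInf then show ?thesis using assms by simp
next
  case MInf then show ?thesis using assms by simp
qed

lemma step:
  fixes \<beta> cJ \<rho> s :: real
  assumes b: "0 < \<beta>" "\<beta> < 1" and cJ: "cJ \<ge> 1"
    and HJp: "\<forall>x\<in>X0. \<forall>r. 0 < r \<and> ereal r < ereal \<beta> * R0 X0 x \<longrightarrow>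
       (\<forall>y \<in> ball x (\<beta>\<^sup>2 * r). \<forall>E \<in> sets borel. E \<subseteq> - ball x r \<longrightarrow>
          emeasure (\<mu> x (ball x (\<beta> * r))) E \<le> ennreal cJ * emeasure (\<mu> y (ball x r)) E)"
    and N: "\<alpha> ^ N \<le> a"
    and x0: "x0 \<in> X0" and R: "0 < R" "ereal R < R0 X0 x0"
    and h: "h \<in> harmonic_bpos \<mu> (ball x0 R)"
    and z: "z \<in> ball x0 (\<alpha>*R/16)"
    and rho: "0 < \<rho>" "dist x0 w + \<rho> / \<beta> \<le> \<alpha>*R/8"
    and sdef: "s = h w" and spos: "0 < s"
    and hyp: "\<forall>y\<in>ball w \<rho>. h y \<le> (1 + \<delta>) * s"
    and capc: "h z * c0 * m0 (R/2) / (\<eta> * (\<zeta> * s)) \<le> (a * min \<alpha> \<beta> ^ N * m0 (\<beta>*\<rho>) / c0) / (2*c)"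
    and p1: "p1 = \<eta> * a * min \<alpha> \<beta> ^ N / (4*c*c0^2)" and dl: "\<delta> = p1/4" and ze: "\<zeta> = p1/(4*(1+cJ))"
  shows False
proof -
  define \<alpha>1 where "\<alpha>1 = min \<alpha> \<beta>"
  define r where "r = \<beta> * \<rho>"
  have hnn: "\<And>y. 0 \<le> h y" and hh: "h \<in> harmonic \<mu> (ball x0 R)" and hum: "univ_meas_fun h"
    using h unfolding harmonic_bpos_def harmonic_def by auto
  have clB: "closure (ball x0 R) \<subseteq> X0" using in_X0[OF R(2) R(1)] .
  have aR: "0 < \<alpha> * R" "\<alpha> * R < R" using params R by auto
  have a1: "0 < \<alpha>1" "\<alpha>1 \<le> \<alpha>" "\<alpha>1 \<le> \<beta>" "\<alpha>1 \<le> 1" unfolding \<alpha>1_def using params b by auto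
  have cpos: "1 \<le> c" by (rule c_ge1)
  have "\<rho> * \<beta> \<le> \<rho> * 1" using rho b by (intro mult_left_mono) auto
  then have rrb: "\<rho> \<le> \<rho> / \<beta>" using b by (simp add: le_divide_eq)
  have rpos: "0 < r" unfolding r_def using b rho by simp
  have "\<beta> * \<rho> \<le> 1 * \<rho>" using rho b by (intro mult_right_mono) auto
  then have rr: "r \<le> \<rho>" unfolding r_def by simp
  have "\<alpha>1 * r \<le> 1 * r" using a1 rpos by (intro mult_right_mono) auto
  then have a1r: "\<alpha>1 * r \<le> r" by simp
  have a1rpos: "0 < \<alpha>1 * r" using a1 rpos by simp
  have rb: "dist x0 w + \<rho> / \<beta> \<le> R" using rho aR by linarith
  have Rw: "ereal (\<rho> / \<beta>) < R0 X0 w" using R0_lemma(1)[OF R(2) rb] rho b by simp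
  have Rw_r: "ereal r < R0 X0 w" using Rw rr rrb by (metis ereal_less_eq(3) order.trans order_le_less_trans)
  have Rw_a1r: "ereal (\<alpha>1 * r) < R0 X0 w" using Rw_r a1r by (metis ereal_less_eq(3) order_le_less_trans)
  have RwHJ: "ereal \<rho> < ereal \<beta> * R0 X0 w" by (rule ereal_div_lt[OF b(1) Rw])
  have dwr: "dist x0 w + \<rho> < R" using rrb rb aR rho by linarith
  have dwr8: "dist x0 w + \<rho> \<le> \<alpha>*R/8" using rrb rho by linarith
  have "dist x0 w < R" using dwr rho by linarith
  then have "w \<in> ball x0 R" by simp
  then have wX: "w \<in> X0" using clB closure_subset[of "ball x0 R"] by blast
  have clU': "closure (ball w \<rho>) \<subseteq> ball x0 R"
  proof -
    have "closure (ball w \<rho>) \<subseteq> cball w \<rho>" by (rule closure_minimal[OF ball_subset_cball closed_cball])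
    also have "\<dots> \<subseteq> ball x0 R"
    proof
      fix y assume "y \<in> cball w \<rho>"
      then have "dist w y \<le> \<rho>" by simp
      moreover have "dist x0 y \<le> dist x0 w + dist w y" by (rule dist_triangle)
      ultimately show "y \<in> ball x0 R" using dwr by simp
    qed
    finally show ?thesis .
  qed
  have U'c: "ball w \<rho> \<in> calU (ball x0 R)" using clU' unfolding calU_def by auto
  have U'X: "ball w \<rho> \<in> calU X0" by (rule calU_X0[OF clB U'c])
  have Bsub: "ball w r \<subseteq> ball w \<rho>" using rr by (rule subset_ball)
  have clBw: "closure (ball w r) \<subseteq> ball x0 R" using closure_mono[OF Bsub] clU' by blast
  have BwX: "ball w r \<in> calU X0" using clBw clB closure_subset[of "ball x0 R"] unfolding calU_def by auto
  define D where "D = ball w (\<alpha>1 * r)"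
  have DB: "D \<subseteq> ball w r" unfolding D_def using a1r by (rule subset_ball)
  have DO: "D \<subseteq> ball x0 (\<alpha>*R/8)"
  proof
    fix y assume "y \<in> D"
    then have "dist w y < \<alpha>1 * r" unfolding D_def by simp
    moreover have "dist x0 y \<le> dist x0 w + dist w y" by (rule dist_triangle)
    ultimately show "y \<in> ball x0 (\<alpha>*R/8)" using a1r rr dwr8 by simp
  qed
  have DX: "D \<subseteq> X0" using DB Bsub clU' clB closure_subset[of "ball x0 R"] closure_subset[of "ball w \<rho>"] by blast
  have BX: "ball w r \<subseteq> X0" using Bsub clU' clB closure_subset[of "ball x0 R"] closure_subset[of "ball w \<rho>"] by blast
  have p1pos: "0 < p1" unfolding p1 using params a1 cpos by (simp add: \<alpha>1_def)
  have zpos: "0 < \<zeta>" unfolding ze using p1pos cJ by simp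
  have p1le: "p1 \<le> 1"
  proof -
    have "\<alpha>1 ^ N \<le> 1" using a1 by (simp add: power_le_one)
    then have "\<eta> * a * \<alpha>1 ^ N \<le> 1 * 1 * 1" using params a1
      by (intro mult_mono) auto
    moreover have "1 \<le> 4*c*c0^2" using cpos params by (simp add: one_le_power order_trans[OF _ mult_right_mono[of 1 "4*c" "c0^2"]])
    ultimately show ?thesis unfolding p1 \<alpha>1_def[symmetric] by (simp add: divide_le_eq)
  qed
  have z1: "\<zeta> \<le> p1/4" unfolding ze using p1pos cJ by (simp add: divide_le_eq field_simps)
  have zle1: "\<zeta> \<le> 1" using z1 p1le by linarith
  have m0r: "0 < m0 r" using m0_pos rpos by simp
  define v where "v = a * \<alpha>1 ^ N * m0 r / c0"
  have vpos: "0 < v" unfolding v_def using params a1 m0r by simp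
  have TD: "ennreal (m0 (\<alpha>1 * r) / c0) \<le> m D" unfolding D_def using T[OF wX a1rpos Rw_a1r] by simp
  have PLr: "a * \<alpha>1 ^ N * m0 r \<le> m0 (\<alpha>1 * r)" by (rule PL[OF N a1(1) a1(4) rpos])
  have "v \<le> m0 (\<alpha>1 * r) / c0" unfolding v_def using PLr params by (simp add: divide_right_mono)
  then have mD: "ennreal v \<le> m D" using TD by (meson ennreal_leI order_trans)
  have TB: "ennreal (m0 r / c0) \<le> m (ball w r)" "m (ball w r) \<le> ennreal (c0 * m0 r)"
    using T[OF wX rpos Rw_r] by auto
  define A where "A = {y\<in>D. \<zeta> * s \<le> h y}"
  have Dborel: "D \<in> sets borel" unfolding D_def by simp
  have Aum: "univ_meas A" unfolding A_def by (rule um_ge[OF hum Dborel])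
  have DAum: "univ_meas (D - A)"
  proof -
    have "D - A = {y\<in>D. \<not> \<zeta> * s \<le> h y}" unfolding A_def by auto
    then show ?thesis using um_lt[OF hum Dborel] by simp
  qed
  have AX: "A \<subseteq> X0" using DX unfolding A_def by auto
  have zs: "0 < \<zeta> * s" using zpos spos by simp
  have mA: "m A \<le> ennreal (v / (2*c))"
  proof -
    have "m A = (SUP G \<in> {G. G \<subseteq> A \<and> closed G}. m G)" by (rule cap_inner[OF Aum AX])
    also have "\<dots> \<le> ennreal (v / (2*c))"
    proof (rule SUP_least)
      fix G assume G: "G \<in> {G. G \<subseteq> A \<and> closed G}"
      then have GO: "G \<subseteq> ball x0 (\<alpha>*R/8)" using DO unfolding A_def by auto
      have hG: "\<forall>y\<in>G. \<zeta> * s \<le> h y" using G unfolding A_def by auto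
      have "m G \<le> ennreal (h z * c0 * m0 (R/2) / (\<eta> * (\<zeta> * s)))"
        by (rule CL[OF x0 R h z _ GO zs hG]) (use G in auto)
      also have "\<dots> \<le> ennreal (v / (2*c))" using capc unfolding v_def \<alpha>1_def r_def by (intro ennreal_leI) simp
      finally show "m G \<le> ennreal (v / (2*c))" .
    qed
    finally show ?thesis .
  qed
  have Dun: "A \<union> (D - A) = D" unfolding A_def by auto
  have mDA: "ennreal (v / (4*c)) < m (D - A)"
  proof (rule ccontr)
    assume "\<not> ennreal (v / (4*c)) < m (D - A)"
    then have le: "m (D - A) \<le> ennreal (v / (4*c))" by simp
    have "m D \<le> ennreal c * (m A + m (D - A))"
      using cap_union[OF Aum DAum AX] DX Dun by auto
    also have "\<dots> \<le> ennreal c * (ennreal (v / (2*c)) + ennreal (v / (4*c)))"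
      using mA le by (intro mult_left_mono add_mono) auto
    also have "\<dots> = ennreal (c * (v / (2*c) + v / (4*c)))"
      using vpos cpos by (simp add: ennreal_plus[symmetric] ennreal_mult[symmetric])
    also have "c * (v / (2*c) + v / (4*c)) = 3/4 * v" using cpos by (simp add: field_simps)
    finally have "ennreal v \<le> ennreal (3/4 * v)" using mD by (meson order_trans)
    then have "v \<le> 3/4 * v" using vpos by (simp add: ennreal_le_iff)
    then show False using vpos by simp
  qed
  have DAX: "D - A \<subseteq> X0" using DX by auto
  obtain F where F: "F \<subseteq> D - A" "closed F" and mF: "ennreal (v / (4*c)) < m F"
    using mDA unfolding cap_inner[OF DAum DAX] by (auto simp: less_SUP_iff)
  have FD: "F \<subseteq> D" using F by auto
  have hF: "\<forall>y\<in>F. h y < \<zeta> * s" using F unfolding A_def by auto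
  have Fa: "F \<subseteq> ball w (\<alpha> * r)" using FD unfolding D_def
    using subset_ball[of "\<alpha>1 * r" "\<alpha> * r" w] a1 rpos by (meson mult_right_mono less_imp_le order_trans)
  have win: "w \<in> ball w (\<alpha> * r)" using params rpos by simp
  have KSw: "emeasure (\<mu> w (ball w r - F)) F \<ge> ennreal \<eta> * m F / m (ball w r)"
    by (rule KS[OF wX rpos Rw_r win F(2) Fa])
  have mFB: "m F \<le> m (ball w r)" using F(2) FD DB BX by (intro m_mono) auto
  have finB: "m (ball w r) < top" using TB(2) by (simp add: le_less_trans)
  define bb where "bb = enn2real (m (ball w r))"
  define f where "f = enn2real (m F)"
  have bbq: "m (ball w r) = ennreal bb" unfolding bb_def using finB by simp
  have fq: "m F = ennreal f" unfolding f_def using finB mFB by (simp add: le_less_trans)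
  have bb0: "0 \<le> bb" unfolding bb_def by simp
  have f0: "0 \<le> f" unfolding f_def by simp
  have bb2: "bb \<le> c0 * m0 r" using TB(2) unfolding bbq using params m0r by simp
  have bb1: "m0 r / c0 \<le> bb" using TB(1) unfolding bbq by (simp add: ennreal_le_iff[OF bb0])
  have "0 < m0 r / c0" using m0r params by simp
  then have bbpos: "0 < bb" using bb1 by linarith
  have fv: "v / (4*c) < f"
  proof (rule ccontr)
    assume "\<not> v / (4*c) < f"
    then have "ennreal f \<le> ennreal (v / (4*c))" by (intro ennreal_leI) simp
    then show False using mF unfolding fq by simp
  qed
  have "\<eta> * m F / m (ball w r) = ennreal (\<eta> * f / bb)" unfolding fq bbq
    using params bbpos f0 by (simp add: ennreal_mult[symmetric] divide_ennreal)
  have Pge0: "ennreal \<eta> * m F / m (ball w r) = ennreal (\<eta> * f / bb)" unfolding fq bbq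
    using params bbpos f0 by (simp add: ennreal_mult[symmetric] divide_ennreal)
  have "p1 \<le> \<eta> * f / bb"
  proof -
    have "(v / (4*c)) / (c0 * m0 r) \<le> f / bb"
      using fv bb2 bbpos vpos cpos f0 by (intro frac_le) auto
    moreover have "(v / (4*c)) / (c0 * m0 r) = a * \<alpha>1 ^ N / (4*c*c0^2)"
      unfolding v_def using m0r params cpos by (simp add: field_simps power2_eq_square)
    ultimately have "\<eta> * (a * \<alpha>1 ^ N / (4*c*c0^2)) \<le> \<eta> * (f / bb)"
      using params by (intro mult_left_mono) auto
    then show ?thesis unfolding p1 \<alpha>1_def[symmetric] by simp
  qed
  then have PF: "ennreal p1 \<le> emeasure (\<mu> w (ball w r - F)) F"
    using KSw Pge0 by (metis ennreal_leI order_trans)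
  define V1 where "V1 = ball w r - F"
  have V1o: "open V1" unfolding V1_def using F(2) by auto
  have clV1: "closure V1 \<subseteq> ball x0 R" unfolding V1_def using clBw closure_mono[of "ball w r - F" "ball w r"] by blast
  have V1c: "V1 \<in> calU (ball x0 R)" using V1o clV1 unfolding calU_def by auto
  have V1X: "V1 \<in> calU X0" by (rule calU_X0[OF clB V1c])
  have V1B: "V1 \<subseteq> ball w r" unfolding V1_def by auto
  have s_ge: "\<zeta> * s \<le> s" using zle1 spos by (simp add: mult_le_cancel_right1)
  have wV1: "w \<in> V1" unfolding V1_def using rpos hF sdef s_ge by force
  let ?M1 = "\<mu> w V1"
  have sM1: "sets ?M1 = sets borel" by (rule M0_sets[OF V1X])
  have Fs: "F \<in> sets borel" using F(2) by simp
  have U'F: "ball w \<rho> - F \<in> sets borel" using F(2) by auto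
  have U'co: "- ball w \<rho> \<in> sets borel" by auto
  have Fne: "F \<noteq> {}"
  proof
    assume "F = {}"
    then have "emeasure ?M1 F = 0" by simp
    then show False using PF p1pos unfolding V1_def by simp
  qed
  then obtain y where yF: "y \<in> F" by auto
  have yD: "y \<in> D" using yF FD by auto
  have yU: "y \<in> ball w \<rho>" using yD DB Bsub by auto
  have "\<alpha>1 * r \<le> \<beta> * r" using a1 rpos by (intro mult_right_mono) auto
  then have yb: "y \<in> ball w (\<beta>\<^sup>2 * \<rho>)" using yD unfolding D_def r_def by (simp add: power2_eq_square mult.assoc)
  have hy: "h y < \<zeta> * s" using hF yF by auto
  have hw: "ennreal s = (\<integral>\<^sup>+x. ennreal (h x) \<partial>?M1)" unfolding sdef by (rule HM[OF hh hnn V1c V1X wV1])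
  have hmc: "h \<in> borel_measurable (completion ?M1)" by (rule mu_meas[OF hum V1X])
  have Fc: "F \<in> sets (completion ?M1)" "ball w \<rho> - F \<in> sets (completion ?M1)" "- ball w \<rho> \<in> sets (completion ?M1)"
    using Fs U'F U'co sM1 by auto
  have "(\<integral>\<^sup>+x. ennreal (h x) \<partial>?M1) \<le> (\<integral>\<^sup>+x. ennreal (\<zeta> * s) * indicator F x
        + (ennreal ((1+\<delta>) * s) * indicator (ball w \<rho> - F) x + ennreal (h x) * indicator (- ball w \<rho>) x) \<partial>?M1)"
  proof (intro nn_integral_mono)
    fix x
    show "ennreal (h x) \<le> ennreal (\<zeta> * s) * indicator F x
        + (ennreal ((1+\<delta>) * s) * indicator (ball w \<rho> - F) x + ennreal (h x) * indicator (- ball w \<rho>) x)"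
    proof (cases "x \<in> ball w \<rho>")
      case True
      show ?thesis
      proof (cases "x \<in> F")
        case True
        then have "h x \<le> \<zeta> * s" using hF by (auto intro: less_imp_le)
        then have "ennreal (h x) \<le> ennreal (\<zeta> * s)" by (rule ennreal_leI)
        then show ?thesis using True \<open>x \<in> ball w \<rho>\<close> by simp
      next
        case False then show ?thesis using \<open>x \<in> ball w \<rho>\<close> hyp by (auto intro!: ennreal_leI)
      qed
    next
      case False
      then have "x \<notin> F" using FD DB Bsub by blast
      then show ?thesis using False by simp
    qed
  qed
  also have "\<dots> = (\<integral>\<^sup>+x. ennreal (\<zeta> * s) * indicator F x
        + (ennreal ((1+\<delta>) * s) * indicator (ball w \<rho> - F) x + ennreal (h x) * indicator (- ball w \<rho>) x) \<partial>completion ?M1)"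
    by (simp add: nn_integral_completion)
  also have "\<dots> = ennreal (\<zeta> * s) * emeasure ?M1 F + (ennreal ((1+\<delta>) * s) * emeasure ?M1 (ball w \<rho> - F)
        + (\<integral>\<^sup>+x. ennreal (h x) * indicator (- ball w \<rho>) x \<partial>completion ?M1))"
  proof -
    have m1: "(\<lambda>x. ennreal (\<zeta> * s) * indicator F x) \<in> borel_measurable (completion ?M1)" using Fc by measurable
    have m2: "(\<lambda>x. ennreal ((1+\<delta>) * s) * indicator (ball w \<rho> - F) x) \<in> borel_measurable (completion ?M1)" using Fc by measurable
    have m3: "(\<lambda>x. ennreal (h x) * indicator (- ball w \<rho>) x) \<in> borel_measurable (completion ?M1)" using Fc hmc by measurable
    have m23: "(\<lambda>x. ennreal ((1+\<delta>) * s) * indicator (ball w \<rho> - F) x + ennreal (h x) * indicator (- ball w \<rho>) x) \<in> borel_measurable (completion ?M1)"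
      using m2 m3 by (rule borel_measurable_add)
    have Fm: "F \<in> sets ?M1" "ball w \<rho> - F \<in> sets ?M1" using Fs U'F sM1 by auto
    show ?thesis
      apply (subst nn_integral_add[OF m1 m23])
      apply (subst nn_integral_add[OF m2 m3])
      apply (subst nn_integral_cmult_indicator[OF Fc(1)])
      apply (subst nn_integral_cmult_indicator[OF Fc(2)])
      using Fm by simp
  qed
  finally have est1: "ennreal s \<le> ennreal (\<zeta> * s) * emeasure ?M1 F + (ennreal ((1+\<delta>) * s) * emeasure ?M1 (ball w \<rho> - F)
        + (\<integral>\<^sup>+x. ennreal (h x) * indicator (- ball w \<rho>) x \<partial>?M1))"
    unfolding hw by (simp add: nn_integral_completion)
  let ?M2 = "\<mu> w (ball w r)"
  let ?M3 = "\<mu> y (ball w \<rho>)"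
  have far1: "(\<integral>\<^sup>+x. ennreal (h x) * indicator (- ball w \<rho>) x \<partial>?M1) \<le> 1 * (\<integral>\<^sup>+x. ennreal (h x) * indicator (- ball w \<rho>) x \<partial>?M2)"
  proof (rule dom_int[OF finite_mu[OF BwX] sM1 M0_sets[OF BwX] U'co _ hum])
    fix E :: "'a set" assume E: "E \<in> sets borel" "E \<subseteq> - ball w \<rho>"
    have "E \<inter> ball w r = {}" using E Bsub by auto
    then show "emeasure ?M1 E \<le> 1 * emeasure ?M2 E" using mono_out[OF BwX V1X V1B E(1)] by simp
  qed
  have far2: "(\<integral>\<^sup>+x. ennreal (h x) * indicator (- ball w \<rho>) x \<partial>?M2) \<le> ennreal cJ * (\<integral>\<^sup>+x. ennreal (h x) * indicator (- ball w \<rho>) x \<partial>?M3)"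
  proof (rule dom_int[OF finite_mu[OF U'X] M0_sets[OF BwX] M0_sets[OF U'X] U'co _ hum])
    fix E :: "'a set" assume E: "E \<in> sets borel" "E \<subseteq> - ball w \<rho>"
    have "emeasure (\<mu> w (ball w (\<beta> * \<rho>))) E \<le> ennreal cJ * emeasure (\<mu> y (ball w \<rho>)) E"
      using HJp wX rho RwHJ yb E by blast
    then show "emeasure ?M2 E \<le> ennreal cJ * emeasure ?M3 E" unfolding r_def .
  qed
  have far3: "(\<integral>\<^sup>+x. ennreal (h x) * indicator (- ball w \<rho>) x \<partial>?M3) \<le> (\<integral>\<^sup>+x. ennreal (h x) \<partial>?M3)"
    by (intro nn_integral_mono) (simp split: split_indicator)
  have far4: "(\<integral>\<^sup>+x. ennreal (h x) \<partial>?M3) = ennreal (h y)" by (rule HM[OF hh hnn U'c U'X yU, symmetric])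
  have "ennreal cJ * ennreal (h y) \<le> ennreal cJ * ennreal (\<zeta> * s)" using hy by (intro mult_left_mono ennreal_leI) auto
  also have "\<dots> = ennreal (cJ * \<zeta> * s)" using cJ zpos spos by (simp add: ennreal_mult[symmetric] mult.assoc)
  finally have far5: "ennreal cJ * ennreal (h y) \<le> ennreal (cJ * \<zeta> * s)" .
  have far: "(\<integral>\<^sup>+x. ennreal (h x) * indicator (- ball w \<rho>) x \<partial>?M1) \<le> ennreal (cJ * \<zeta> * s)"
  proof -
    have "(\<integral>\<^sup>+x. ennreal (h x) * indicator (- ball w \<rho>) x \<partial>?M1) \<le> ennreal cJ * (\<integral>\<^sup>+x. ennreal (h x) * indicator (- ball w \<rho>) x \<partial>?M3)"
      using far1 far2 by simp
    also have "\<dots> \<le> ennreal cJ * ennreal (h y)" using far3 far4 by (intro mult_left_mono) auto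
    finally show ?thesis using far5 by simp
  qed
  define P where "P = measure ?M1 F"
  define Q where "Q = measure ?M1 (ball w \<rho> - F)"
  have Pq: "emeasure ?M1 F = ennreal P" unfolding P_def using ennreal_measure_mu[OF V1X] by simp
  have Qq: "emeasure ?M1 (ball w \<rho> - F) = ennreal Q" unfolding Q_def using ennreal_measure_mu[OF V1X] by simp
  have P0: "0 \<le> P" "0 \<le> Q" unfolding P_def Q_def by auto
  have "emeasure ?M1 F + emeasure ?M1 (ball w \<rho> - F) = emeasure ?M1 (F \<union> (ball w \<rho> - F))"
    using Fs U'F sM1 by (intro plus_emeasure) auto
  also have "\<dots> \<le> 1" by (rule emeasure_le1[OF V1X])
  finally have "ennreal P + ennreal Q \<le> 1" unfolding Pq Qq .
  then have "ennreal (P + Q) \<le> 1" using ennreal_plus[OF P0] by simp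
  then have PQ: "P + Q \<le> 1" by (simp add: ennreal_le_1)
  have Pp1: "p1 \<le> P" using PF unfolding Pq V1_def[symmetric] using P0 by (simp add: ennreal_le_iff)
  have "ennreal s \<le> ennreal (\<zeta> * s) * ennreal P + (ennreal ((1+\<delta>) * s) * ennreal Q + ennreal (cJ * \<zeta> * s))"
  proof -
    have "ennreal ((1+\<delta>) * s) * ennreal Q + (\<integral>\<^sup>+x. ennreal (h x) * indicator (- ball w \<rho>) x \<partial>?M1)
        \<le> ennreal ((1+\<delta>) * s) * ennreal Q + ennreal (cJ * \<zeta> * s)" by (rule add_left_mono[OF far])
    then have "ennreal (\<zeta> * s) * ennreal P + (ennreal ((1+\<delta>) * s) * ennreal Q + (\<integral>\<^sup>+x. ennreal (h x) * indicator (- ball w \<rho>) x \<partial>?M1))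
        \<le> ennreal (\<zeta> * s) * ennreal P + (ennreal ((1+\<delta>) * s) * ennreal Q + ennreal (cJ * \<zeta> * s))" by (rule add_left_mono)
    with est1 show ?thesis unfolding Pq Qq by (rule order_trans)
  qed
  also have "\<dots> = ennreal (\<zeta> * s * P + ((1+\<delta>) * s * Q + cJ * \<zeta> * s))"
  proof -
    have n1: "0 \<le> \<zeta> * s * P" using zpos spos P0 by simp
    have dpos': "0 \<le> \<delta>" unfolding dl using p1pos by simp
    have n2: "0 \<le> (1+\<delta>) * s * Q" using dpos' spos P0 by simp
    have n3: "0 \<le> cJ * \<zeta> * s" using cJ zpos spos by simp
    have q1: "ennreal (\<zeta> * s) * ennreal P = ennreal (\<zeta> * s * P)"
      using ennreal_mult[of "\<zeta> * s" P] zpos spos P0 by simp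
    have q2: "ennreal ((1+\<delta>) * s) * ennreal Q = ennreal ((1+\<delta>) * s * Q)"
      using ennreal_mult[of "(1+\<delta>) * s" Q] dpos' spos P0 by simp
    have q3: "ennreal (\<zeta> * s * P + ((1+\<delta>) * s * Q + cJ * \<zeta> * s)) = ennreal (\<zeta> * s * P) + (ennreal ((1+\<delta>) * s * Q) + ennreal (cJ * \<zeta> * s))"
      using ennreal_plus[OF n2 n3] ennreal_plus[of "\<zeta> * s * P" "(1+\<delta>) * s * Q + cJ * \<zeta> * s"] n1 n2 n3 by simp
    show ?thesis unfolding q1 q2 q3 ..
  qed
  finally have ineq0: "ennreal s \<le> ennreal (\<zeta> * s * P + ((1+\<delta>) * s * Q + cJ * \<zeta> * s))" .
  have "0 \<le> \<zeta> * s * P + ((1+\<delta>) * s * Q + cJ * \<zeta> * s)"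
    using zpos spos P0 cJ p1pos unfolding dl by simp
  then have ineq: "s \<le> \<zeta> * s * P + ((1+\<delta>) * s * Q + cJ * \<zeta> * s)"
    using ineq0 by (simp add: ennreal_le_iff)
  have "s * 1 \<le> s * (\<zeta> * P + (1+\<delta>) * Q + cJ * \<zeta>)" using ineq by (simp add: algebra_simps)
  then have e1: "1 \<le> \<zeta> * P + (1+\<delta>) * Q + cJ * \<zeta>" using spos by (simp only: mult_le_cancel_left_pos)
  have dpos: "0 \<le> \<delta>" unfolding dl using p1pos by simp
  have e2: "(1+\<delta>) * Q \<le> (1+\<delta>) * (1 - P)" using PQ dpos by (intro mult_left_mono) auto
  have e3: "cJ * \<zeta> \<le> p1/4" unfolding ze using p1pos cJ by (simp add: field_simps)
  have cc: "3/4 \<le> 1 + \<delta> - \<zeta>" using z1 p1le dpos by linarith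
  have e6: "p1 * (1 + \<delta> - \<zeta>) \<le> P * (1 + \<delta> - \<zeta>)" using Pp1 cc by (intro mult_right_mono) auto
  have e7: "p1 * (3/4) \<le> p1 * (1 + \<delta> - \<zeta>)" using cc p1pos by (intro mult_left_mono) auto
  have id: "\<zeta> * P + (1+\<delta>) * (1 - P) = (1 + \<delta>) - P * (1 + \<delta> - \<zeta>)" by (simp add: algebra_simps)
  have "1 \<le> (1 + \<delta>) - P * (1 + \<delta> - \<zeta>) + cJ * \<zeta>" using e1 e2 id by linarith
  then show False using e3 e6 e7 p1pos unfolding dl by linarith
qed

lemma frac_cross: fixes x b y d :: real
  assumes "0 < b" "0 < d" "x * d \<le> y * b" shows "x / b \<le> y / d"
proof -
  have "x / b = (x * d) / (b * d)" using assms by simp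
  also have "\<dots> \<le> (y * b) / (b * d)" using assms by (intro divide_right_mono) auto
  also have "\<dots> = y / d" using assms by simp
  finally show ?thesis .
qed

lemma q_lemma: fixes \<delta> :: real assumes "0 \<le> \<delta>" "\<delta> \<le> 1"
  shows "1 \<le> (1 + \<delta>) * ((1 - \<delta>/4) * (1 - \<delta>/4))"
proof -
  have dd: "\<delta> * \<delta> \<le> \<delta>" using assms by (simp add: mult_left_le_one_le)
  have ddd: "0 \<le> \<delta> * \<delta> * \<delta>" using assms by simp
  have "(1 + \<delta>) * ((1 - \<delta>/4) * (1 - \<delta>/4)) = 1 + \<delta>/2 - 7/16 * (\<delta> * \<delta>) + 1/16 * (\<delta> * \<delta> * \<delta>)"
    by (simp add: field_simps)
  then show ?thesis using dd ddd assms by linarith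
qed

lemma bern: fixes \<theta> e :: real assumes "0 \<le> \<theta>" "\<theta> \<le> 1" "real N * \<theta> \<le> e"
  shows "1 - e \<le> (1 - \<theta>) ^ N"
proof -
  have "1 + real N * (- \<theta>) \<le> (1 + (- \<theta>)) ^ N" by (rule Bernoulli_inequality) (use assms in simp)
  then show ?thesis using assms by simp
qed

lemma HJ_HI:
  assumes "HJ X0 \<mu>"
  shows "HI X0 \<mu>"
proof -
  obtain \<beta> cJ where b: "0 < \<beta>" "\<beta> < 1" and cJ: "cJ \<ge> 1"
    and HJp: "\<forall>x\<in>X0. \<forall>r. 0 < r \<and> ereal r < ereal \<beta> * R0 X0 x \<longrightarrow>
       (\<forall>y \<in> ball x (\<beta>\<^sup>2 * r). \<forall>E \<in> sets borel. E \<subseteq> - ball x r \<longrightarrow>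
          emeasure (\<mu> x (ball x (\<beta> * r))) E \<le> ennreal cJ * emeasure (\<mu> y (ball x r)) E)"
    using assms unfolding HJ_def by blast
  obtain N :: nat where N: "\<alpha> ^ N \<le> a" "N \<ge> 1" using exN by blast
  have cpos: "1 \<le> c" by (rule c_ge1)
  define \<alpha>1 where "\<alpha>1 = min \<alpha> \<beta>"
  have a1: "0 < \<alpha>1" "\<alpha>1 \<le> 1" unfolding \<alpha>1_def using params b by auto
  define p1 where "p1 = \<eta> * a * min \<alpha> \<beta> ^ N / (4*c*c0^2)"
  define \<delta> where "\<delta> = p1/4"
  define \<zeta> where "\<zeta> = p1/(4*(1+cJ))"
  have p1pos: "0 < p1" unfolding p1_def using params a1 cpos by (simp add: \<alpha>1_def)
  have p1le: "p1 \<le> 1"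
  proof -
    have "\<alpha>1 ^ N \<le> 1" using a1 by (simp add: power_le_one)
    then have "\<eta> * a * \<alpha>1 ^ N \<le> 1 * 1 * 1" using params a1 by (intro mult_mono) auto
    moreover have "1 \<le> 4*c*c0^2"
    proof -
      have "1 \<le> c0^2" using params by (simp add: one_le_power)
      moreover have "1 \<le> 4 * c" using cpos by simp
      ultimately have "1 * 1 \<le> 4 * c * c0^2" by (intro mult_mono) auto
      then show ?thesis by simp
    qed
    ultimately show ?thesis unfolding p1_def \<alpha>1_def[symmetric] by (simp add: divide_le_eq)
  qed
  have dpos: "0 < \<delta>" "\<delta> \<le> 1" unfolding \<delta>_def using p1pos p1le by auto
  have zpos: "0 < \<zeta>" unfolding \<zeta>_def using p1pos cJ by simp
  define e where "e = \<delta>/4"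
  define \<theta> where "\<theta> = min \<beta> (e / real N)"
  define q where "q = 1 - e"
  have Npos: "0 < real N" using N by simp
  have epos: "0 < e" "e \<le> 1/4" unfolding e_def using dpos by auto
  have th: "0 < \<theta>" "\<theta> \<le> \<beta>" "\<theta> < 1" "real N * \<theta> \<le> e"
  proof -
    show "0 < \<theta>" unfolding \<theta>_def using b epos Npos by simp
    show "\<theta> \<le> \<beta>" unfolding \<theta>_def by simp
    then show "\<theta> < 1" using b by simp
    have "\<theta> \<le> e / real N" unfolding \<theta>_def by simp
    then show "real N * \<theta> \<le> e" using Npos by (simp add: le_divide_eq mult.commute)
  qed
  have qpos: "0 < q" "q < 1" unfolding q_def using epos by auto
  have qq: "1 \<le> (1 + \<delta>) * (q * q)" unfolding q_def e_def using q_lemma[of \<delta>] dpos by simp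
  have qN: "q \<le> (1 - \<theta>) ^ N" unfolding q_def using bern[of \<theta> N e] th by simp
  define K1 where "K1 = \<eta> * \<zeta> * a^2 * (2 * \<alpha>1 * \<beta> * \<theta>) ^ N"
  have K1pos: "0 < K1" unfolding K1_def using params zpos a1 b th by simp
  define C2 where "C2 = 2 * c * c0^2 / K1"
  define C3 where "C3 = C2 / q"
  define K0 where "K0 = C3 * (16 / \<alpha>) ^ N"
  define K where "K = max 1 K0"
  have C2pos: "0 < C2" unfolding C2_def using K1pos cpos params by simp
  have C3pos: "0 < C3" unfolding C3_def using C2pos qpos by simp
  have Kge: "1 \<le> K" "K0 \<le> K" unfolding K_def by auto
  have claim: "h w' \<le> K0 * h z"
    if x0: "x0 \<in> X0" and R: "0 < R" "ereal R < R0 X0 x0" and h: "h \<in> harmonic_bpos \<mu> (ball x0 R)"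
      and w': "w' \<in> ball x0 (\<alpha>*R/16)" and z: "z \<in> ball x0 (\<alpha>*R/16)" for x0 R h w' z
  proof -
    have hnn: "\<And>y. 0 \<le> h y" and hb: "bounded (range h)" using h unfolding harmonic_bpos_def by auto
    obtain B where B: "\<And>y. h y \<le> B" using hb unfolding bounded_iff by (metis abs_le_D1 rangeI real_norm_def)
    have aR: "0 < \<alpha> * R" "\<alpha> * R < R" using params R by auto
    define \<Omega> where "\<Omega> = ball x0 (\<alpha>*R/8)"
    define d where "d = (\<lambda>y. \<alpha>*R/8 - dist x0 y)"
    define \<Phi> where "\<Phi> = (SUP y\<in>\<Omega>. h y * d y ^ N)"
    have dpos\<Omega>: "\<And>y. y \<in> \<Omega> \<Longrightarrow> 0 < d y" unfolding \<Omega>_def d_def by simp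
    have \<Omega>ne: "\<Omega> \<noteq> {}" unfolding \<Omega>_def using aR by auto
    have bdd: "bdd_above ((\<lambda>y. h y * d y ^ N) ` \<Omega>)"
    proof (rule bdd_aboveI2)
      fix y assume y: "y \<in> \<Omega>"
      have "d y \<le> \<alpha>*R/8" unfolding d_def by simp
      then have "d y ^ N \<le> (\<alpha>*R/8) ^ N" using dpos\<Omega>[OF y] by (intro power_mono) auto
      then show "h y * d y ^ N \<le> B * (\<alpha>*R/8) ^ N" using B[of y] hnn[of y] dpos\<Omega>[OF y]
        by (intro mult_mono) auto
    qed
    have \<Phi>up: "\<And>y. y \<in> \<Omega> \<Longrightarrow> h y * d y ^ N \<le> \<Phi>" unfolding \<Phi>_def using bdd by (intro cSUP_upper)
    have hz0: "0 \<le> h z" by (rule hnn)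
    have \<Phi>bound: "\<Phi> \<le> C3 * R ^ N * h z"
    proof (rule ccontr)
      assume "\<not> \<Phi> \<le> C3 * R ^ N * h z"
      then have big: "C3 * R ^ N * h z < \<Phi>" by simp
      have "0 \<le> C3 * R ^ N * h z" using C3pos R hz0 by simp
      then have \<Phi>pos: "0 < \<Phi>" using big by linarith
      have "q * \<Phi> < \<Phi>" using qpos \<Phi>pos by simp
      then obtain w where w: "w \<in> \<Omega>" and wbig: "q * \<Phi> < h w * d w ^ N"
        unfolding \<Phi>_def using less_cSUP_iff[OF \<Omega>ne bdd] by (auto simp: \<Phi>_def)
      define s where "s = h w"
      define dw where "dw = d w"
      have dwpos: "0 < dw" unfolding dw_def by (rule dpos\<Omega>[OF w])
      have qP: "0 < q * \<Phi>" using qpos \<Phi>pos by simp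
      have sdw: "0 < s * dw ^ N" using wbig qP unfolding s_def dw_def by linarith
      have spos: "0 < s" using sdw dwpos hnn[of w] unfolding s_def by (simp add: zero_less_mult_iff)
      define \<rho> where "\<rho> = \<theta> * dw"
      have rpos: "0 < \<rho>" unfolding \<rho>_def using th dwpos by simp
      have "\<rho> / \<beta> \<le> dw"
      proof -
        have "\<theta> * dw \<le> \<beta> * dw" using th dwpos by (intro mult_right_mono) auto
        then show ?thesis unfolding \<rho>_def using b by (simp add: divide_le_eq mult.commute)
      qed
      then have "\<rho> / \<beta> \<le> \<alpha>*R/8 - dist x0 w" unfolding dw_def d_def by simp
      then have rb: "dist x0 w + \<rho> / \<beta> \<le> \<alpha>*R/8" by linarith
      have rdw: "\<rho> \<le> dw"
      proof -
        have "\<theta> * dw \<le> 1 * dw" using th dwpos by (intro mult_right_mono) auto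
        then show ?thesis unfolding \<rho>_def by simp
      qed
      have hyp: "\<forall>y\<in>ball w \<rho>. h y \<le> (1 + \<delta>) * s"
      proof
        fix y assume y: "y \<in> ball w \<rho>"
        have "dist x0 y \<le> dist x0 w + dist w y" by (rule dist_triangle)
        moreover have "dist w y < \<rho>" using y by simp
        ultimately have "dw - \<rho> \<le> d y" unfolding d_def dw_def by linarith
        moreover have "(1 - \<theta>) * dw = dw - \<rho>" unfolding \<rho>_def by (simp add: algebra_simps)
        ultimately have dy: "(1 - \<theta>) * dw \<le> d y" by simp
        have dyp: "0 < (1 - \<theta>) * dw" using th dwpos by simp
        have yO: "y \<in> \<Omega>" unfolding \<Omega>_def using dy dyp unfolding d_def by simp
        have "q * dw ^ N \<le> (1 - \<theta>) ^ N * dw ^ N" using qN dwpos by (intro mult_right_mono) auto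
        also have "\<dots> = ((1 - \<theta>) * dw) ^ N" by (simp add: power_mult_distrib)
        also have "\<dots> \<le> d y ^ N" using dy dyp by (intro power_mono) auto
        finally have "h y * (q * dw ^ N) \<le> h y * d y ^ N" using hnn by (intro mult_left_mono) auto
        also have "\<dots> \<le> \<Phi>" by (rule \<Phi>up[OF yO])
        finally have i1: "h y * (q * dw ^ N) \<le> \<Phi>" .
        have "q * (h y * (q * dw ^ N)) \<le> q * \<Phi>" using i1 qpos by (intro mult_left_mono) auto
        also have "\<dots> < s * dw ^ N" using wbig unfolding s_def dw_def .
        finally have "(h y * (q * q)) * dw ^ N < s * dw ^ N" by (simp add: algebra_simps)
        then have i2: "h y * (q * q) \<le> s" using dwpos by (simp add: mult_less_cancel_right)
        have "h y = h y * 1" by simp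
        also have "\<dots> \<le> h y * ((1 + \<delta>) * (q * q))" using qq hnn by (intro mult_left_mono) auto
        also have "\<dots> = (1 + \<delta>) * (h y * (q * q))" by simp
        also have "\<dots> \<le> (1 + \<delta>) * s" using i2 dpos by (intro mult_left_mono) auto
        finally show "h y \<le> (1 + \<delta>) * s" .
      qed
      have M: "0 < m0 (R/2)" using m0_pos R by simp
      define lam where "lam = 2 * \<beta> * \<rho> / R"
      have lampos: "0 < lam" unfolding lam_def using b rpos R by simp
      have lam1: "lam \<le> 1"
      proof -
        have "\<beta> * \<rho> \<le> 1 * \<rho>" using b rpos by (intro mult_right_mono) auto
        moreover have "\<rho> \<le> \<alpha> * R / 8" using rdw zero_le_dist[of x0 w] unfolding dw_def d_def by linarith
        ultimately have "2 * \<beta> * \<rho> \<le> R" using aR by linarith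
        then show ?thesis unfolding lam_def using R by (simp add: divide_le_eq)
      qed
      have lamR: "lam * (R/2) = \<beta> * \<rho>" unfolding lam_def using R by simp
      have PLb: "a * lam ^ N * m0 (R/2) \<le> m0 (\<beta> * \<rho>)"
        using PL[OF N(1) lampos lam1, of "R/2"] R lamR by simp
      have lamN: "lam ^ N = (2 * \<beta> * \<theta>) ^ N * dw ^ N / R ^ N"
        unfolding lam_def \<rho>_def by (simp add: power_divide power_mult_distrib)
      have X: "C2 * R ^ N * h z \<le> s * dw ^ N"
      proof -
        have "C2 * R ^ N * h z = q * (C3 * R ^ N * h z)" unfolding C3_def using qpos by simp
        also have "\<dots> \<le> q * \<Phi>" using big qpos by (intro mult_left_mono) auto
        also have "\<dots> \<le> s * dw ^ N" using wbig unfolding s_def dw_def by simp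
        finally show ?thesis .
      qed
      have capc: "h z * c0 * m0 (R/2) / (\<eta> * (\<zeta> * s)) \<le> (a * min \<alpha> \<beta> ^ N * m0 (\<beta>*\<rho>) / c0) / (2*c)"
      proof -
        have "h z * c0 * m0 (R/2) / (\<eta> * (\<zeta> * s)) \<le> (a * \<alpha>1 ^ N * (a * lam ^ N * m0 (R/2))) / (2*c*c0)"
        proof (rule frac_cross)
          show "0 < \<eta> * (\<zeta> * s)" using params zpos spos by simp
          show "0 < 2*c*c0" using cpos params by simp
          have Rn: "0 < R ^ N" using R by simp
          have "2 * c * c0^2 * R ^ N * h z \<le> K1 * (s * dw ^ N)"
          proof -
            have "2 * c * c0^2 * R ^ N * h z = K1 * (C2 * R ^ N * h z)" unfolding C2_def using K1pos by simp
            also have "\<dots> \<le> K1 * (s * dw ^ N)" using X K1pos by (intro mult_left_mono) auto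
            finally show ?thesis .
          qed
          then have "(2 * c * c0^2 * R ^ N * h z) * m0 (R/2) \<le> (K1 * (s * dw ^ N)) * m0 (R/2)"
            using M by (intro mult_right_mono) auto
          then have i: "(2 * c * c0^2 * R ^ N * h z) * m0 (R/2) / R ^ N \<le> (K1 * (s * dw ^ N)) * m0 (R/2) / R ^ N"
            using Rn by (intro divide_right_mono) auto
          have eq1: "h z * c0 * m0 (R/2) * (2*c*c0) = (2 * c * c0^2 * R ^ N * h z) * m0 (R/2) / R ^ N"
            using Rn R(1) by (simp add: power2_eq_square)
          have eq2: "a * \<alpha>1 ^ N * (a * lam ^ N * m0 (R/2)) * (\<eta> * (\<zeta> * s)) = (K1 * (s * dw ^ N)) * m0 (R/2) / R ^ N"
            unfolding lamN K1_def using Rn R(1) by (simp add: power_mult_distrib power2_eq_square)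
          show "h z * c0 * m0 (R/2) * (2*c*c0) \<le> a * \<alpha>1 ^ N * (a * lam ^ N * m0 (R/2)) * (\<eta> * (\<zeta> * s))"
            unfolding eq1 eq2 by (rule i)
        qed
        also have "\<dots> \<le> (a * \<alpha>1 ^ N * m0 (\<beta>*\<rho>)) / (2*c*c0)"
          using PLb params a1 cpos by (intro divide_right_mono mult_left_mono) auto
        also have "\<dots> = (a * min \<alpha> \<beta> ^ N * m0 (\<beta>*\<rho>) / c0) / (2*c)" unfolding \<alpha>1_def by simp
        finally show ?thesis .
      qed
      show False
        by (rule step[OF b cJ HJp N(1) x0 R h z rpos rb s_def spos hyp capc p1_def \<delta>_def \<zeta>_def])
    qed
    have dw'd: "dist x0 w' < \<alpha>*R/16" using w' by simp
    have w'O: "w' \<in> \<Omega>" unfolding \<Omega>_def using dw'd aR by simp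
    have dw': "\<alpha>*R/16 \<le> d w'" unfolding d_def using dw'd by linarith
    have pos16: "0 < \<alpha>*R/16" using aR by simp
    have "h w' * (\<alpha>*R/16) ^ N \<le> h w' * d w' ^ N" using dw' pos16 hnn by (intro mult_left_mono power_mono) auto
    also have "\<dots> \<le> \<Phi>" by (rule \<Phi>up[OF w'O])
    also have "\<dots> \<le> C3 * R ^ N * h z" by (rule \<Phi>bound)
    also have "\<dots> = (C3 * (16/\<alpha>) ^ N * h z) * (\<alpha>*R/16) ^ N"
      using params by (simp add: power_divide power_mult_distrib field_simps)
    finally have "h w' * (\<alpha>*R/16) ^ N \<le> (K0 * h z) * (\<alpha>*R/16) ^ N" unfolding K0_def .
    then show "h w' \<le> K0 * h z" using pos16 by (simp add: mult_le_cancel_right)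
  qed
  show ?thesis unfolding HI_def
  proof (rule exI[of _ "\<alpha>/16"], intro conjI exI[of _ K] ballI allI impI)
    fix x0 R h assume x0: "x0 \<in> X0" and R: "0 < R \<and> ereal R < R0 X0 x0" and h: "h \<in> harmonic_bpos \<mu> (ball x0 R)"
    have hnn: "\<And>y. 0 \<le> h y" using h unfolding harmonic_bpos_def by auto
    have eq: "ball x0 (\<alpha>/16 * R) = ball x0 (\<alpha>*R/16)" by simp
    have aRp: "0 < \<alpha> * R" using params(1) R by simp
    then have ne: "ball x0 (\<alpha>*R/16) \<noteq> {}" by (metis centre_in_ball divide_pos_pos empty_iff zero_less_numeral)
    have Kpos: "0 < K" using Kge by simp
    have "(SUP y \<in> ball x0 (\<alpha>*R/16). h y) \<le> K * (INF y \<in> ball x0 (\<alpha>*R/16). h y)"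
    proof (rule cSUP_least[OF ne])
      fix w' assume w': "w' \<in> ball x0 (\<alpha>*R/16)"
      have "h w' / K \<le> (INF y \<in> ball x0 (\<alpha>*R/16). h y)"
      proof (rule cINF_greatest[OF ne])
        fix z assume z: "z \<in> ball x0 (\<alpha>*R/16)"
        have "h w' \<le> K0 * h z" by (rule claim[OF x0 _ _ h w' z]) (use R in auto)
        also have "\<dots> \<le> K * h z" using Kge hnn by (intro mult_right_mono) auto
        finally show "h w' / K \<le> h z" using Kpos by (simp add: divide_le_eq mult.commute)
      qed
      then show "h w' \<le> K * (INF y \<in> ball x0 (\<alpha>*R/16). h y)" using Kpos by (simp add: divide_le_eq mult.commute)
    qed
    then show "(SUP y \<in> ball x0 (\<alpha>/16 * R). h y) \<le> K * (INF y \<in> ball x0 (\<alpha>/16 * R). h y)" unfolding eq .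
  next
    show "0 < \<alpha>/16" using params by simp
  next
    show "\<alpha>/16 < 1" using params by simp
  next
    show "1 \<le> K" by (rule Kge)
  qed
qed

end

theorem theorem3p3:
  fixes X0 :: "'a::{metric_space, second_countable_topology} set"
    and \<mu> :: "'a \<Rightarrow> 'a set \<Rightarrow> 'a measure"
    and m :: "'a set \<Rightarrow> ennreal" and m0 :: "real \<Rightarrow> real"
    and c c0 \<alpha> a \<eta> :: real
  assumes X0: "open X0"
    and M0_sets: "\<And>x U. U \<in> calU X0 \<Longrightarrow> sets (\<mu> x U) = sets borel"
    and M0_null: "\<And>x U. U \<in> calU X0 \<Longrightarrow> emeasure (\<mu> x U) U = 0"
    and M0_norm: "\<And>x U. U \<in> calU X0 \<Longrightarrow> emeasure (\<mu> x U) UNIV \<le> 1"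
    and M0_out: "\<And>x U E. U \<in> calU X0 \<Longrightarrow> x \<notin> U \<Longrightarrow> E \<in> sets borel \<Longrightarrow>
                 emeasure (\<mu> x U) E = indicator E x"
    and M1_meas: "\<And>U E. U \<in> calU X0 \<Longrightarrow> E \<in> sets borel \<Longrightarrow>
                     univ_meas_fun (\<lambda>y. measure (\<mu> y U) E)"
    and M1_balayage: "\<And>x U V E. U \<in> calU X0 \<Longrightarrow> V \<in> calU X0 \<Longrightarrow> V \<subseteq> U \<Longrightarrow> E \<in> sets borel \<Longrightarrow>
                     emeasure (\<mu> x U) E = (\<integral>\<^sup>+ y. emeasure (\<mu> y U) E \<partial>completion (\<mu> x V))"
    and cap: "quasi_capacity X0 c m"
    and m0_pos: "\<And>r. r > 0 \<Longrightarrow> m0 r > 0"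
    and m0_mono: "mono_on {0<..} m0"
    and m0_cont: "continuous_on {0<..} m0"
    and params: "0 < \<alpha>" "\<alpha> < 1/3" "0 < a" "a < 1/3" "0 < \<eta>" "\<eta> < 1/3" "c0 \<ge> 1"
    and T: "\<And>x r. x \<in> X0 \<Longrightarrow> 0 < r \<Longrightarrow> ereal r < R0 X0 x \<Longrightarrow>
              ennreal (m0 r / c0) \<le> m (ball x r) \<and> m (ball x r) \<le> ennreal (c0 * m0 r)"
    and SC1: "\<And>r. r > 0 \<Longrightarrow> a * m0 r \<le> m0 (\<alpha> * r)"
    and SC2: "(m0 \<longlongrightarrow> 0) (at_right 0)"
    and KS: "\<And>x r y F. x \<in> X0 \<Longrightarrow> 0 < r \<Longrightarrow> ereal r < R0 X0 x \<Longrightarrow> y \<in> ball x (\<alpha> * r) \<Longrightarrow>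
               closed F \<Longrightarrow> F \<subseteq> ball x (\<alpha> * r) \<Longrightarrow>
               emeasure (\<mu> y (ball x r - F)) F \<ge> ennreal \<eta> * m F / m (ball x r)"
  shows "(HI X0 \<mu> \<longleftrightarrow> HJ X0 \<mu>) \<and>
         ((\<forall>x \<in> X0. \<forall>r. 0 < r \<and> ereal r < R0 X0 x \<longrightarrow>
              emeasure (\<mu> x (ball x r)) (- frontier (ball x r)) = 0) \<longrightarrow> HI X0 \<mu>)"
proof -
  interpret S: setting X0 \<mu> m m0 c c0 \<alpha> a \<eta>
    by (intro setting.intro) (fact X0 M0_sets M0_null M0_norm M0_out M1_meas M1_balayage cap m0_pos m0_mono params T SC1 KS)+
  show ?thesis using S.HI_HJ S.HJ_HI S.bdry_HJ by blast
qed

end
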